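(* For $t\in[0,1]$ let $f_t\in\mathrm{Bir}(\mathbb{P}^2_{\mathbb{C}})$ be $f_t\colon[x_0:x_1:x_2]\dashrightarrow[x_0^2:x_0x_1:x_0x_2+t(1-t)x_1^2]$. Let $\sigma\colon[-1,1]\to\mathrm{PSU}(3)$ be a continuous surjective map, regard $\mathrm{PSU}(3)\subset\mathrm{PGL}_3(\mathbb{C})=\mathrm{Aut}(\mathbb{P}^2_{\mathbb{C}})\subset\mathrm{Bir}(\mathbb{P}^2_{\mathbb{C}})$, let $\hat\sigma\colon(0,1]\to\mathrm{PSU}(3)$, $\hat\sigma(t)=\sigma(\sin(1))^{-1}\sigma(\sin(1/t))$, and $\rho\colon(0,1]\to\mathrm{Bir}(\mathbb{P}^2_{\mathbb{C}})$, $\rho(t)=\hat\sigma(t)\circ f_t\circ\hat\sigma(t)^{-1}$. Then $\rho$ extends to a continuous map $\hat\rho\colon[0,1]\to\mathrm{Bir}(\mathbb{P}^2_{\mathbb{C}})$ with $\hat\rho(0)=\mathrm{id}$. Moreover, the map $H\colon[0,1]\times[0,1]\to\mathrm{Bir}(\mathbb{P}^2_{\mathbb{C}})$ given by $H(s,t)=\hat\rho(t)$ for $t\geq s$ and $H(s,t)=\hat\sigma(s)\circ f_t\circ\hat\sigma(s)^{-1}$ for $t<s$ is continuous; in particular $\hat\rho$ is homotopic to the map $t\mapsto f_t$.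
   Context: All topologies on $\mathrm{Bir}(\mathbb{P}^2_{\mathbb{C}})$ are the Euclidean topology: for $d\geq1$, $W_d(\mathbb{C})$ is the projective space of classes of non-zero triples of degree-$d$ homogeneous polynomials in $\mathbb{C}[x_0,x_1,x_2]$ modulo scalars with its Euclidean topology; $H_d(\mathbb{C})\subset W_d(\mathbb{C})$ the subset defining birational maps; the set $\mathrm{Bir}(\mathbb{P}^2_{\mathbb{C}})_{\leq d}$ of maps of degree $\leq d$ gets the quotient topology via the natural surjection $H_d(\mathbb{C})\to\mathrm{Bir}(\mathbb{P}^2_{\mathbb{C}})_{\leq d}$, and $\mathrm{Bir}(\mathbb{P}^2_{\mathbb{C}})$ the inductive limit topology. *)

theory Defs
  imports "HOL-Analysis.Analysis"
begin

text \<open>A monomial x0^a0 x1^a1 x2^a2 is given by its exponent function on the index type 3.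
  A triple (F0,F1,F2) of polynomials is given by its coefficient function:
  F (i, a) is the coefficient of the monomial a in the component F_i.\<close>

type_synonym mono = "3 \<Rightarrow> nat"
type_synonym triple = "3 \<times> mono \<Rightarrow> complex"

definition mdeg :: "mono \<Rightarrow> nat" where
  "mdeg a = (\<Sum>j\<in>UNIV. a j)"

definition mon :: "mono \<Rightarrow> complex^3 \<Rightarrow> complex" where
  "mon a x = (\<Prod>j\<in>UNIV. (x $ j) ^ a j)"

definition is_triple :: "nat \<Rightarrow> triple \<Rightarrow> bool" where
  "is_triple d F \<longleftrightarrow> (\<exists>k. F k \<noteq> 0) \<and> (\<forall>i a. F (i, a) \<noteq> 0 \<longrightarrow> mdeg a = d)"

definition ev :: "triple \<Rightarrow> complex^3 \<Rightarrow> complex^3" where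
  "ev F x = (\<chi> i. \<Sum>a\<in>{a. F (i, a) \<noteq> 0}. F (i, a) * mon a x)"

definition par :: "complex^3 \<Rightarrow> complex^3 \<Rightarrow> bool" where
  "par u v \<longleftrightarrow> (\<forall>i j. u $ i * v $ j = u $ j * v $ i)"

text \<open>G is a (rational) right inverse of F: F o G is defined and equals the identity.\<close>
definition inv_pair :: "triple \<Rightarrow> triple \<Rightarrow> bool" where
  "inv_pair F G \<longleftrightarrow> (\<exists>x. ev F (ev G x) \<noteq> 0) \<and> (\<forall>x. par (ev F (ev G x)) x)"

definition birational :: "triple \<Rightarrow> bool" where
  "birational F \<longleftrightarrow> (\<exists>d. is_triple d F) \<and>
     (\<exists>e G. is_triple e G \<and> inv_pair F G \<and> inv_pair G F)"

text \<open>The rational map defined by F, represented as the set of all triples (of any degree)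
  defining the same rational map.\<close>
definition bir_of :: "triple \<Rightarrow> triple set" where
  "bir_of F = {G. (\<exists>e. is_triple e G) \<and> (\<forall>x. par (ev F x) (ev G x))}"

definition quot_top :: "'a topology \<Rightarrow> ('a \<Rightarrow> 'b) \<Rightarrow> 'b topology" where
  "quot_top X f = topology (\<lambda>U. U \<subseteq> f ` topspace X \<and> openin X {x \<in> topspace X. f x \<in> U})"

definition triples :: "nat \<Rightarrow> triple set" where
  "triples d = {F. is_triple d F}"

definition proj_cls :: "triple \<Rightarrow> triple set" where
  "proj_cls F = {G. \<exists>c. c \<noteq> 0 \<and> G = (\<lambda>k. c * F k)}"

definition W :: "nat \<Rightarrow> triple set set" where
  "W d = proj_cls ` triples d"

text \<open>Euclidean topology of the projective space W_d: quotient of the (Euclidean) space of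
  non-zero coefficient triples by scalars.\<close>
definition W_top :: "nat \<Rightarrow> triple set topology" where
  "W_top d = quot_top (top_of_set (triples d)) proj_cls"

definition H :: "nat \<Rightarrow> triple set set" where
  "H d = {P \<in> W d. \<forall>F\<in>P. birational F}"

definition H_top :: "nat \<Rightarrow> triple set topology" where
  "H_top d = subtopology (W_top d) (H d)"

definition bir_of_cls :: "triple set \<Rightarrow> triple set" where
  "bir_of_cls P = bir_of (SOME F. F \<in> P)"

definition Bir_le :: "nat \<Rightarrow> triple set set" where
  "Bir_le d = bir_of_cls ` H d"

definition Bir_le_top :: "nat \<Rightarrow> triple set topology" where
  "Bir_le_top d = quot_top (H_top d) bir_of_cls"

definition Bir :: "triple set set" where
  "Bir = (\<Union>d\<in>{1..}. Bir_le d)"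

definition bir_top :: "triple set topology" where
  "bir_top = topology (\<lambda>U. U \<subseteq> Bir \<and> (\<forall>d\<ge>1. openin (Bir_le_top d) (U \<inter> Bir_le d)))"

definition bir_comp :: "triple set \<Rightarrow> triple set \<Rightarrow> triple set" where
  "bir_comp \<phi> \<psi> = (THE C. C \<in> Bir \<and>
     (\<forall>F\<in>\<phi>. \<forall>G\<in>\<psi>. \<forall>K\<in>C. \<forall>x. par (ev K x) (ev F (ev G x))))"

definition lin_triple :: "complex^3^3 \<Rightarrow> triple" where
  "lin_triple A = (\<lambda>(i, a). \<Sum>j\<in>UNIV. if a = (\<lambda>k. if k = j then 1 else 0) then A $ i $ j else 0)"

definition bir_id :: "triple set" where
  "bir_id = bir_of (lin_triple (mat 1))"

definition bir_inv :: "triple set \<Rightarrow> triple set" where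
  "bir_inv \<phi> = (THE \<psi>. \<psi> \<in> Bir \<and> bir_comp \<phi> \<psi> = bir_id)"

definition cstar :: "complex^3^3 \<Rightarrow> complex^3^3" where
  "cstar A = (\<chi> i j. cnj (A $ j $ i))"

definition PSU3 :: "triple set set" where
  "PSU3 = {bir_of (lin_triple A) | A. A ** cstar A = mat 1 \<and> det A = 1}"

definition ex3 :: "nat \<Rightarrow> nat \<Rightarrow> nat \<Rightarrow> mono" where
  "ex3 a b c = (\<lambda>k. if k = 0 then a else if k = 1 then b else c)"

definition ftr :: "real \<Rightarrow> triple" where
  "ftr t = (\<lambda>(i, a).
     if i = 0 \<and> a = ex3 2 0 0 then 1
     else if i = 1 \<and> a = ex3 1 1 0 then 1
     else if i = 2 \<and> a = ex3 1 0 1 then 1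
     else if i = 2 \<and> a = ex3 0 2 0 then complex_of_real (t * (1 - t))
     else 0)"

definition f :: "real \<Rightarrow> triple set" where
  "f t = bir_of (ftr t)"

end

theory Submission
  imports Defs
begin

lemma three_cases: "(i::3) = 0 \<or> i = 1 \<or> i = 2"
  using exhaust_3[of i] by auto

lemma UNIV_3': "(UNIV::3 set) = {0,1,2}"
  using three_cases by auto

lemma sum3: "sum g (UNIV::3 set) = g 0 + g 1 + g 2"
  unfolding UNIV_3' by (simp add: add.assoc)

lemma prod3: "prod g (UNIV::3 set) = g 0 * g 1 * g 2"
  unfolding UNIV_3' by (simp add: mult.assoc)

lemma mon3: "mon a x = x$0^(a 0) * x$1^(a 1) * x$2^(a 2)"
  by (simp add: mon_def prod3)

definition Md :: "nat \<Rightarrow> mono set" where "Md d = {a. mdeg a = d}"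

lemma finite_Md: "finite (Md d)"
proof -
  have "Md d \<subseteq> Pi UNIV (\<lambda>_. {..d})"
    unfolding Md_def mdeg_def by (auto intro: member_le_sum)
  moreover have "finite (Pi UNIV (\<lambda>_::3. {..d}))"
    using finite_PiE[of UNIV "\<lambda>_::3. {..d}"] by (simp add: PiE_UNIV_domain)
  ultimately show ?thesis by (rule finite_subset)
qed

lemma supp_sub_Md: "is_triple d F \<Longrightarrow> {a. F (i,a) \<noteq> 0} \<subseteq> Md d"
  by (auto simp: is_triple_def Md_def)

lemma ev_superset:
  assumes "finite S" "\<And>a. F (i,a) \<noteq> 0 \<Longrightarrow> a \<in> S"
  shows "ev F x $ i = (\<Sum>a\<in>S. F (i,a) * mon a x)"
  unfolding ev_def using assms by (auto intro!: sum.mono_neutral_left)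

lemma ev_Md: "is_triple d F \<Longrightarrow> ev F x $ i = (\<Sum>a\<in>Md d. F (i,a) * mon a x)"
  by (rule ev_superset) (use finite_Md supp_sub_Md[of d F i] in auto)

lemma mon_scale: "mon a (c *s x) = c ^ mdeg a * mon a x"
  by (simp add: mon_def mdeg_def power_mult_distrib prod.distrib power_sum)

lemma ev_scale: "is_triple d F \<Longrightarrow> ev F (c *s x) = c ^ d *s ev F x"
  by (simp add: vec_eq_iff ev_Md mon_scale sum_distrib_left Md_def mult.left_commute)

lemma ev_zero: "is_triple d F \<Longrightarrow> d \<ge> 1 \<Longrightarrow> ev F 0 = 0"
  using ev_scale[of d F 0 0] by (simp add: power_0_left)

lemma continuous_ev: "is_triple d F \<Longrightarrow> continuous_on UNIV (ev F)"
proof -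
  assume F: "is_triple d F"
  have "ev F = (\<lambda>x. \<chi> i. \<Sum>a\<in>Md d. F (i,a) * mon a x)"
    using ev_Md[OF F] by (auto simp: vec_eq_iff fun_eq_iff)
  moreover have "continuous_on UNIV (\<lambda>x::complex^3. \<chi> i. \<Sum>a\<in>Md d. F (i,a) * mon a x)"
    by (intro continuous_on_vec_lambda continuous_intros) (simp add: mon_def continuous_intros)
  ultimately show ?thesis by simp
qed

lemma inf_ball: "r > 0 \<Longrightarrow> infinite (ball (z::complex) r)"
  using uncountable_ball[of r z] countable_finite by blast

lemma poly1_zero:
  fixes b :: "nat \<Rightarrow> complex"
  assumes "infinite Z" "\<forall>z\<in>Z. (\<Sum>i\<le>N. b i * z^i) = 0" "i \<le> N"
  shows "b i = 0"
proof (rule ccontr)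
  assume "b i \<noteq> 0"
  then have "finite {z. (\<Sum>i\<le>N. b i * z^i) = 0}"
    using polyfun_roots_finite[of b i N] assms(3) by blast
  moreover have "Z \<subseteq> {z. (\<Sum>i\<le>N. b i * z^i) = 0}" using assms(2) by auto
  ultimately show False using assms(1) finite_subset by blast
qed

lemma poly_step:
  fixes h :: "'a \<Rightarrow> complex"
  assumes "finite S" "infinite Z" "\<forall>z\<in>Z. (\<Sum>a\<in>S. h a * z^(g a)) = 0"
  shows "(\<Sum>a\<in>{a\<in>S. g a = i}. h a) = 0"
proof -
  define N where "N = Max (insert 0 (g ` S))"
  have gN: "g a \<le> N" if "a \<in> S" for a
    unfolding N_def using assms(1) that by (intro Max_ge) auto
  have eq: "(\<Sum>a\<in>S. h a * z^(g a)) = (\<Sum>j\<le>N. (\<Sum>a\<in>{a\<in>S. g a = j}. h a) * z^j)" for z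
  proof -
    have "(\<Sum>j\<le>N. \<Sum>a\<in>{a\<in>S. g a = j}. h a * z^(g a)) = (\<Sum>a\<in>S. h a * z^(g a))"
      by (rule sum.group) (use assms(1) gN in auto)
    then have "(\<Sum>a\<in>S. h a * z^(g a)) = (\<Sum>j\<le>N. \<Sum>a\<in>{a\<in>S. g a = j}. h a * z^(g a))" by simp
    also have "\<dots> = (\<Sum>j\<le>N. (\<Sum>a\<in>{a\<in>S. g a = j}. h a) * z^j)"
      by (auto simp: sum_distrib_right intro!: sum.cong)
    finally show ?thesis .
  qed
  show ?thesis
  proof (cases "i \<le> N")
    case True
    then show ?thesis using poly1_zero[OF assms(2), where N=N and b="\<lambda>j. (\<Sum>a\<in>{a\<in>S. g a = j}. h a)" and i=i]
      assms(3) eq by auto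
  next
    case False
    then have "{a\<in>S. g a = i} = {}" using gN by force
    then show ?thesis by (simp only: sum.empty)
  qed
qed

definition vec3 :: "'a \<Rightarrow> 'a \<Rightarrow> 'a \<Rightarrow> 'a^3" where
  "vec3 u v w = (\<chi> j. if j = 0 then u else if j = 1 then v else w)"

lemma vec3_nth [simp]: "vec3 u v w $ 0 = u" "vec3 u v w $ 1 = v" "vec3 u v w $ 2 = w"
  by (simp_all add: vec3_def)

lemma mono_eq3: "(a::mono) = b \<longleftrightarrow> a 0 = b 0 \<and> a 1 = b 1 \<and> a 2 = b 2"
  using three_cases by (metis ext)

lemma vanish_box:
  fixes c :: "mono \<Rightarrow> complex"
  assumes S: "finite S" and Z: "infinite Z0" "infinite Z1" "infinite Z2"
    and van: "\<And>x. x$0 \<in> Z0 \<Longrightarrow> x$1 \<in> Z1 \<Longrightarrow> x$2 \<in> Z2 \<Longrightarrow> (\<Sum>a\<in>S. c a * mon a x) = 0"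
    and a: "b \<in> S"
  shows "c b = 0"
proof -
  have s1: "(\<Sum>a\<in>{a\<in>S. a 0 = i}. c a * x1^(a 1) * x2^(a 2)) = 0"
    if "x1 \<in> Z1" "x2 \<in> Z2" for i x1 x2
  proof (rule poly_step[OF S Z(1)])
    show "\<forall>z\<in>Z0. (\<Sum>a\<in>S. c a * x1 ^ a 1 * x2 ^ a 2 * z ^ a 0) = 0"
      using van[of "vec3 _ x1 x2"] that by (auto simp: mon3 mult_ac)
  qed
  have s2: "(\<Sum>a\<in>{a\<in>{a\<in>S. a 0 = i}. a 1 = j}. c a * x2^(a 2)) = 0"
    if "x2 \<in> Z2" for i j x2
  proof (rule poly_step[OF _ Z(2)])
    show "\<forall>z\<in>Z1. (\<Sum>a\<in>{a\<in>S. a 0 = i}. c a * x2 ^ a 2 * z ^ a 1) = 0"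
      using s1[of _ x2 i] that by (auto simp: mult_ac)
  qed (use S in auto)
  have s3: "(\<Sum>a\<in>{a\<in>{a\<in>{a\<in>S. a 0 = i}. a 1 = j}. a 2 = k}. c a) = 0" for i j k
  proof (rule poly_step[OF _ Z(3)])
    show "\<forall>z\<in>Z2. (\<Sum>a\<in>{a\<in>{a\<in>S. a 0 = i}. a 1 = j}. c a * z ^ a 2) = 0"
      using s2 by auto
  qed (use S in auto)
  have "{a\<in>{a\<in>{a\<in>S. a 0 = b 0}. a 1 = b 1}. a 2 = b 2} = {b}"
    using a mono_eq3 by auto
  then show ?thesis using s3[of "b 0" "b 1" "b 2"] by simp
qed

lemma norm_vec3_le: "norm (x::complex^3) \<le> norm (x$0) + norm (x$1) + norm (x$2)"
proof -
  have "norm x \<le> (\<Sum>i\<in>UNIV. norm (x$i))" by (simp add: norm_vec_def L2_set_le_sum)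
  then show ?thesis by (simp add: sum3)
qed

lemma dense_nonzero:
  assumes F: "is_triple d F"
  shows "closure {x. ev F x \<noteq> 0} = UNIV"
proof (rule ccontr)
  assume "closure {x. ev F x \<noteq> 0} \<noteq> UNIV"
  then obtain y where "y \<notin> closure {x. ev F x \<noteq> 0}" by auto
  then obtain e where e: "e > 0" "\<And>x. ev F x \<noteq> 0 \<Longrightarrow> dist x y \<ge> e"
    unfolding closure_approachable by (auto simp: not_less)
  obtain i b where ib: "F (i,b) \<noteq> 0" using F unfolding is_triple_def by auto
  have "F (i,b) = 0"
  proof (rule vanish_box[OF finite_Md inf_ball inf_ball inf_ball])
    show "e/3 > 0" using e by simp
    show "b \<in> Md d" using supp_sub_Md[OF F, of i] ib by auto
    fix x :: "complex^3" assume x: "x$0 \<in> ball (y$0) (e/3)" "x$1 \<in> ball (y$1) (e/3)" "x$2 \<in> ball (y$2) (e/3)"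
    have "dist x y \<le> norm ((x - y)$0) + norm ((x - y)$1) + norm ((x - y)$2)"
      using norm_vec3_le[of "x - y"] by (simp add: dist_norm)
    also have "\<dots> < e" using x by (simp add: dist_norm norm_minus_commute)
    finally have "ev F x = 0" using e(2)[of x] by force
    then show "(\<Sum>a\<in>Md d. F (i, a) * mon a x) = 0"
      using ev_Md[OF F, of x i] by simp
  qed (use e in auto)
  then show False using ib by simp
qed

lemma exists_nonzero: "is_triple d F \<Longrightarrow> \<exists>x. ev F x \<noteq> 0"
proof (rule ccontr)
  assume F: "is_triple d F" and "\<not> (\<exists>x. ev F x \<noteq> 0)"
  then have "{x. ev F x \<noteq> 0} = {}" by auto
  then show False using dense_nonzero[OF F] by simp
qed

lemma par_refl: "par u u" by (simp add: par_def mult.commute)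
lemma par_sym: "par u v \<Longrightarrow> par v u" by (simp add: par_def mult.commute)
lemma par_zero [simp]: "par 0 v" "par u 0" by (simp_all add: par_def)

lemma par_nonzero:
  assumes "u \<noteq> 0" "par u v"
  shows "\<exists>l. v = l *s u"
proof -
  obtain i where i: "u$i \<noteq> 0" using assms(1) by (auto simp: vec_eq_iff)
  define c where "c = v$i / u$i"
  have *: "v$j = c * u$j" for j
  proof -
    have "u$i * v$j = u$j * v$i" using assms(2) unfolding par_def by blast
    then show ?thesis using i unfolding c_def by (simp add: field_simps)
  qed
  have "v = c *s u" by (simp add: vec_eq_iff *)
  then show ?thesis by blast
qed

lemma par_scales: "par (a *s w) (b *s w)"
  by (simp add: par_def mult_ac)

lemma par_scale_left: "par u v \<Longrightarrow> par (c *s u) v"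
  by (simp add: par_def mult_ac)
  
lemma par_scale_right: "par u v \<Longrightarrow> par u (c *s v)"
  by (simp add: par_def mult_ac)

lemma par_scale_left_iff: "c \<noteq> 0 \<Longrightarrow> par (c *s u) v \<longleftrightarrow> par u v"
  by (auto simp: par_def mult_ac)

lemma par_scale_right_iff: "c \<noteq> 0 \<Longrightarrow> par u (c *s v) \<longleftrightarrow> par u v"
  by (auto simp: par_def mult_ac)

lemma par_trans:
  assumes "u \<noteq> 0" "par u v" "par u w" shows "par v w"
proof -
  obtain a where "v = a *s u" using par_nonzero assms by blast
  moreover obtain b where "w = b *s u" using par_nonzero assms by blast
  ultimately show ?thesis by (simp add: par_scales)
qed

lemma par_lin:
  assumes "par u v" shows "par (A *v u) (A *v v)"
proof -
  have "(A *v u)$i * (A *v v)$j = (A *v u)$j * (A *v v)$i" for i j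
  proof -
    have "(A *v u)$i * (A *v v)$j = (\<Sum>k\<in>UNIV. \<Sum>l\<in>UNIV. A$i$k * A$j$l * (u$k * v$l))"
      by (simp add: matrix_vector_mult_def sum_product mult_ac)
    also have "\<dots> = (\<Sum>k\<in>UNIV. \<Sum>l\<in>UNIV. A$i$k * A$j$l * (u$l * v$k))"
      using assms by (simp add: par_def)
    also have "\<dots> = (\<Sum>l\<in>UNIV. \<Sum>k\<in>UNIV. A$i$k * A$j$l * (u$l * v$k))"
      by (rule sum.swap)
    also have "\<dots> = (A *v u)$j * (A *v v)$i"
      by (simp add: matrix_vector_mult_def sum_product mult_ac)
    finally show ?thesis .
  qed
  then show ?thesis by (simp add: par_def)
qed

lemma closed_par:
  assumes "continuous_on UNIV p" "continuous_on UNIV q"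
  shows "closed {x. par (p x) (q x)}"
proof -
  have "{x. par (p x) (q x)} = (\<Inter>i. \<Inter>j. {x. (p x)$i * (q x)$j = (p x)$j * (q x)$i})"
    by (auto simp: par_def)
  moreover have "closed {x. (p x)$i * (q x)$j = (p x)$j * (q x)$i}" for i j
    by (intro closed_Collect_eq continuous_intros assms continuous_on_product_then_coordinatewise) 
  ultimately show ?thesis by (simp add: closed_INT)
qed

lemma par_extend:
  assumes "continuous_on UNIV p" "continuous_on UNIV q" "closure D = UNIV"
    "\<And>x. x \<in> D \<Longrightarrow> par (p x) (q x)"
  shows "par (p x) (q x)"
proof -
  have "closure D \<subseteq> {x. par (p x) (q x)}"
    using closed_par[OF assms(1,2)] assms(4) by (intro closure_minimal) auto
  then show ?thesis using assms(3) by auto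
qed

lemma dense_Int:
  assumes "open A" "closure A = UNIV" "closure B = UNIV"
  shows "closure (A \<inter> B) = UNIV"
proof -
  have "A \<subseteq> closure (A \<inter> B)" using open_Int_closure_subset[OF assms(1), of B] assms(3) by simp
  then have "closure A \<subseteq> closure (A \<inter> B)" by (simp add: closure_minimal)
  then show ?thesis using assms(2) by auto
qed

lemma open_nonzero: "is_triple d F \<Longrightarrow> open {x. ev F x \<noteq> 0}"
  using continuous_ev[of d F] by (intro open_Collect_neq continuous_intros) auto

lemma triple_exI: "is_triple d F \<Longrightarrow> \<exists>e. is_triple e F" by blast

lemma mem_bir_of_self: "is_triple d K \<Longrightarrow> K \<in> bir_of K"
  by (auto simp: bir_of_def par_refl)

lemma bir_of_scale:
  assumes "\<And>x. ev K x = c *s ev K' x" "c \<noteq> 0"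
  shows "bir_of K = bir_of K'"
  using assms by (auto simp: bir_of_def par_scale_left_iff)

lemma bir_of_eq_imp_par:
  assumes "is_triple e K'" "bir_of K = bir_of K'"
  shows "par (ev K x) (ev K' x)"
  using mem_bir_of_self[OF assms(1)] assms(2) by (auto simp: bir_of_def)

lemma par_transfer:
  assumes K: "is_triple d K" and K': "is_triple d' K'" and G: "is_triple e G"
    and KK': "\<And>x. par (ev K x) (ev K' x)" and KG: "\<And>x. par (ev K x) (ev G x)"
  shows "par (ev K' x) (ev G x)"
proof (rule par_extend[OF continuous_ev[OF K'] continuous_ev[OF G] dense_nonzero[OF K]])
  fix x assume "x \<in> {x. ev K x \<noteq> 0}"
  then show "par (ev K' x) (ev G x)" using par_trans KK' KG by blast
qed

lemma par_eq_bir_of: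
  assumes K: "is_triple d K" and K': "is_triple d' K'" and KK': "\<And>x. par (ev K x) (ev K' x)"
  shows "bir_of K = bir_of K'"
proof -
  have "par (ev K' x) (ev G x)" if "is_triple e G" "\<And>x. par (ev K x) (ev G x)" for G e x
    using par_transfer[OF K K' that(1) KK' that(2)] .
  moreover have "par (ev K x) (ev G x)" if "is_triple e G" "\<And>x. par (ev K' x) (ev G x)" for G e x
    using par_transfer[OF K' K that(1) _ that(2)] KK' par_sym by blast
  ultimately show ?thesis unfolding bir_of_def by blast
qed

lemma ev_cmul: "c \<noteq> 0 \<Longrightarrow> ev (\<lambda>k. c * K k) x = c *s ev K x"
  by (simp add: ev_def vec_eq_iff sum_distrib_left mult.assoc)

lemma is_triple_cmul: "is_triple d K \<Longrightarrow> c \<noteq> 0 \<Longrightarrow> is_triple d (\<lambda>k. c * K k)"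
  by (auto simp: is_triple_def)

lemma birational_scaled:
  assumes K: "is_triple d K" and G: "is_triple e G" and "inv_pair K G" "inv_pair G K" "c \<noteq> 0"
  shows "birational (\<lambda>k. c * K k)"
  unfolding birational_def
proof (intro conjI exI)
  show "is_triple d (\<lambda>k. c * K k)" using is_triple_cmul K assms(5) by blast
  show "is_triple e G" by fact
  show "inv_pair (\<lambda>k. c * K k) G"
    using assms(3,5) by (auto simp: inv_pair_def ev_cmul par_scale_left_iff)
  show "inv_pair G (\<lambda>k. c * K k)"
    using assms(4,5) by (auto simp: inv_pair_def ev_cmul ev_scale[OF G] par_scale_left_iff)
qed

lemma Bir_intro:
  assumes K: "is_triple d K" "d \<ge> 1" and bir: "\<And>c. c \<noteq> 0 \<Longrightarrow> birational (\<lambda>k. c * K k)"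
  shows "bir_of K \<in> Bir"
proof -
  have P: "proj_cls K \<in> H d"
    unfolding H_def W_def triples_def proj_cls_def using K bir by auto
  have "K \<in> proj_cls K" unfolding proj_cls_def by (intro CollectI exI[of _ 1]) auto
  then have "(SOME F. F \<in> proj_cls K) \<in> proj_cls K" using someI[of "\<lambda>F. F \<in> proj_cls K" K] by blast
  then obtain c where c: "c \<noteq> 0" "(SOME F. F \<in> proj_cls K) = (\<lambda>k. c * K k)"
    unfolding proj_cls_def by auto
  have "bir_of_cls (proj_cls K) = bir_of K"
    unfolding bir_of_cls_def c(2) by (rule bir_of_scale[OF ev_cmul[OF c(1)] c(1)])
  then have "bir_of K \<in> Bir_le d" unfolding Bir_le_def using P by force
  then show ?thesis unfolding Bir_def using K(2) by auto
qed

lemma Bir_elim: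
  assumes "\<phi> \<in> Bir"
  obtains d K where "d \<ge> 1" "is_triple d K" "birational K" "\<phi> = bir_of K"
proof -
  obtain d P where d: "d \<ge> 1" "P \<in> H d" "\<phi> = bir_of_cls P"
    using assms unfolding Bir_def Bir_le_def by auto
  then obtain F where F: "is_triple d F" "P = proj_cls F" "\<forall>G\<in>P. birational G"
    unfolding H_def W_def triples_def by auto
  have "F \<in> proj_cls F" unfolding proj_cls_def by (intro CollectI exI[of _ 1]) auto
  then have "(SOME G. G \<in> P) \<in> P" using F(2) by (metis someI)
  then obtain c where c: "c \<noteq> 0" "(SOME G. G \<in> P) = (\<lambda>k. c * F k)"
    using F(2) unfolding proj_cls_def by auto
  show ?thesis
  proof (rule that[OF d(1) is_triple_cmul[OF F(1) c(1)]])
    show "birational (\<lambda>k. c * F k)" using F(3) \<open>(SOME G. G \<in> P) \<in> P\<close> c(2) by auto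
    show "\<phi> = bir_of (\<lambda>k. c * F k)" using d(3) c(2) by (simp add: bir_of_cls_def)
  qed
qed

lemma bir_comp_eq:
  assumes F0: "is_triple d F0" "d \<ge> 1" and G0: "is_triple e G0" and K0: "is_triple k K0"
    and comp: "\<And>x. ev K0 x = ev F0 (ev G0 x)" and B: "bir_of K0 \<in> Bir"
  shows "bir_comp (bir_of F0) (bir_of G0) = bir_of K0"
  unfolding bir_comp_def
proof (rule the_equality)
  have "par (ev K x) (ev F (ev G x))"
    if F: "F \<in> bir_of F0" and G: "G \<in> bir_of G0" and K: "K \<in> bir_of K0" for F G K x
  proof -
    obtain dF where dF: "is_triple dF F" "\<And>y. par (ev F0 y) (ev F y)" using F by (auto simp: bir_of_def)
    obtain dG where dG: "is_triple dG G" "\<And>y. par (ev G0 y) (ev G y)" using G by (auto simp: bir_of_def)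
    obtain dK where dK: "is_triple dK K" "\<And>y. par (ev K0 y) (ev K y)" using K by (auto simp: bir_of_def)
    show ?thesis
    proof (rule par_extend[OF continuous_ev[OF dK(1)] _ dense_Int[OF open_nonzero[OF K0] dense_nonzero[OF K0] dense_nonzero[OF dG(1)]]])
      show "continuous_on UNIV (\<lambda>x. ev F (ev G x))"
        using continuous_ev[OF dF(1)] continuous_ev[OF dG(1)]
        by (metis continuous_on_compose2 subset_UNIV)
      fix y assume y: "y \<in> {x. ev K0 x \<noteq> 0} \<inter> {x. ev G x \<noteq> 0}"
      have G0y: "ev G0 y \<noteq> 0"
      proof
        assume "ev G0 y = 0"
        then have "ev K0 y = 0" using comp ev_zero[OF F0] by simp
        then show False using y by simp
      qed
      obtain l where l: "ev G y = l *s ev G0 y" using par_nonzero[OF G0y dG(2)] by blast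
      have l0: "l \<noteq> 0" using l y by auto
      have FG: "ev F0 (ev G y) = l ^ d *s ev K0 y" using l ev_scale[OF F0(1)] comp by simp
      then have FG0: "ev F0 (ev G y) \<noteq> 0" using l0 y by (auto simp: vec_eq_iff)
      obtain m where m: "ev F (ev G y) = m *s ev F0 (ev G y)" using par_nonzero[OF FG0 dF(2)] by blast
      have K0y: "ev K0 y \<noteq> 0" using y by simp
      obtain n where n: "ev K y = n *s ev K0 y" using par_nonzero[OF K0y dK(2)] by blast
      show "par (ev K y) (ev F (ev G y))"
        unfolding n m FG by (simp add: par_scales)
    qed
  qed
  then show "bir_of K0 \<in> Bir \<and> (\<forall>F\<in>bir_of F0. \<forall>G\<in>bir_of G0. \<forall>K\<in>bir_of K0. \<forall>x. par (ev K x) (ev F (ev G x)))"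
    using B by blast
next
  fix C assume C: "C \<in> Bir \<and> (\<forall>F\<in>bir_of F0. \<forall>G\<in>bir_of G0. \<forall>K\<in>C. \<forall>x. par (ev K x) (ev F (ev G x)))"
  then obtain dd K' where K': "is_triple dd K'" "C = bir_of K'" using Bir_elim by metis
  have "par (ev K' x) (ev K0 x)" for x
    using C K' mem_bir_of_self[OF K'(1)] mem_bir_of_self[OF F0(1)] mem_bir_of_self[OF G0] comp by metis
  then show "C = bir_of K0" using par_eq_bir_of[OF K'(1) K0] K'(2) by simp
qed

definition hpoly :: "nat \<Rightarrow> (complex^3 \<Rightarrow> complex) \<Rightarrow> bool" where
  "hpoly d p \<longleftrightarrow> (\<exists>c S. finite S \<and> (\<forall>a\<in>S. mdeg a = d) \<and> (\<forall>x. p x = (\<Sum>a\<in>S. c a * mon a x)))"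

definition ej :: "3 \<Rightarrow> mono" where "ej j = (\<lambda>k. if k = j then 1 else 0)"

lemma mdeg_ej: "mdeg (ej j) = 1"
  by (simp add: mdeg_def ej_def)

lemma mon_ej: "mon (ej j) x = x $ j"
proof -
  have "mon (ej j) x = (\<Prod>k\<in>UNIV. if k = j then x$k else 1)"
    unfolding mon_def ej_def by (intro prod.cong) auto
  then show ?thesis by simp
qed

lemma inj_ej: "inj ej"
  by (auto simp: inj_def ej_def fun_eq_iff split: if_splits)

lemma hpoly_zero: "hpoly d (\<lambda>x. 0)"
  unfolding hpoly_def by (intro exI[of _ "\<lambda>_. 0"] exI[of _ "{}"]) auto

lemma hpoly_const: "hpoly 0 (\<lambda>x. k)"
  unfolding hpoly_def
  by (intro exI[of _ "\<lambda>_. k"] exI[of _ "{\<lambda>_. 0}"]) (auto simp: mdeg_def mon_def)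

lemma hpoly_var: "hpoly 1 (\<lambda>x. x $ j)"
  unfolding hpoly_def
  by (intro exI[of _ "\<lambda>_. 1"] exI[of _ "{ej j}"]) (auto simp: mdeg_ej mon_ej)

lemma hpoly_cmul: "hpoly d p \<Longrightarrow> hpoly d (\<lambda>x. k * p x)"
proof -
  assume "hpoly d p"
  then obtain c S where 1: "finite S" "\<forall>a\<in>S. mdeg a = d" "\<forall>x. p x = (\<Sum>a\<in>S. c a * mon a x)"
    unfolding hpoly_def by blast
  show ?thesis unfolding hpoly_def
    by (intro exI[of _ "\<lambda>a. k * c a"] exI[of _ S]) (use 1 in \<open>auto simp: sum_distrib_left mult.assoc\<close>)
qed

lemma hpoly_add:
  assumes "hpoly d p" "hpoly d q" shows "hpoly d (\<lambda>x. p x + q x)"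
proof -
  obtain c1 S1 where 1: "finite S1" "\<forall>a\<in>S1. mdeg a = d" "\<forall>x. p x = (\<Sum>a\<in>S1. c1 a * mon a x)"
    using assms(1) unfolding hpoly_def by blast
  obtain c2 S2 where 2: "finite S2" "\<forall>a\<in>S2. mdeg a = d" "\<forall>x. q x = (\<Sum>a\<in>S2. c2 a * mon a x)"
    using assms(2) unfolding hpoly_def by blast
  define c where "c a = (if a \<in> S1 then c1 a else 0) + (if a \<in> S2 then c2 a else 0)" for a
  have "p x + q x = (\<Sum>a\<in>S1 \<union> S2. c a * mon a x)" for x
  proof -
    have e1: "(\<Sum>a\<in>S1 \<union> S2. (if a \<in> S1 then c1 a else 0) * mon a x) = (\<Sum>a\<in>S1. c1 a * mon a x)"
      by (rule sum.mono_neutral_cong_right) (use 1 2 in auto)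
    have e2: "(\<Sum>a\<in>S1 \<union> S2. (if a \<in> S2 then c2 a else 0) * mon a x) = (\<Sum>a\<in>S2. c2 a * mon a x)"
      by (rule sum.mono_neutral_cong_right) (use 1 2 in auto)
    show ?thesis unfolding c_def distrib_right sum.distrib e1 e2 using 1 2 by simp
  qed
  then show ?thesis unfolding hpoly_def using 1 2 by (intro exI[of _ c] exI[of _ "S1 \<union> S2"]) auto
qed

definition madd :: "mono \<Rightarrow> mono \<Rightarrow> mono" where "madd b c = (\<lambda>j. b j + c j)"

lemma mdeg_madd: "mdeg (madd b c) = mdeg b + mdeg c"
  by (simp add: mdeg_def madd_def sum.distrib)

lemma mon_madd: "mon (madd b c) x = mon b x * mon c x"
  by (simp add: mon_def madd_def power_add prod.distrib)

lemma hpoly_mult: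
  assumes "hpoly d1 p" "hpoly d2 q" shows "hpoly (d1 + d2) (\<lambda>x. p x * q x)"
proof -
  obtain c1 S1 where 1: "finite S1" "\<forall>a\<in>S1. mdeg a = d1" "\<forall>x. p x = (\<Sum>a\<in>S1. c1 a * mon a x)"
    using assms(1) unfolding hpoly_def by blast
  obtain c2 S2 where 2: "finite S2" "\<forall>a\<in>S2. mdeg a = d2" "\<forall>x. q x = (\<Sum>a\<in>S2. c2 a * mon a x)"
    using assms(2) unfolding hpoly_def by blast
  define g where "g = (\<lambda>bc. madd (fst bc) (snd bc))"
  define S where "S = g ` (S1 \<times> S2)"
  define r where "r a = (\<Sum>bc\<in>{bc\<in>S1 \<times> S2. g bc = a}. c1 (fst bc) * c2 (snd bc))" for a
  have fS: "finite S" unfolding S_def using 1 2 by simp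
  have dS: "\<forall>a\<in>S. mdeg a = d1 + d2" unfolding S_def g_def using 1 2 by (auto simp: mdeg_madd)
  have "p x * q x = (\<Sum>a\<in>S. r a * mon a x)" for x
  proof -
    have "(\<Sum>a\<in>S. r a * mon a x) = (\<Sum>a\<in>S. \<Sum>bc\<in>{bc\<in>S1 \<times> S2. g bc = a}. c1 (fst bc) * c2 (snd bc) * mon (g bc) x)"
      unfolding r_def sum_distrib_right by (intro sum.cong refl) auto
    also have "\<dots> = (\<Sum>bc\<in>S1 \<times> S2. c1 (fst bc) * c2 (snd bc) * mon (g bc) x)"
      by (rule sum.group) (use 1 2 in \<open>auto simp: S_def\<close>)
    also have "\<dots> = (\<Sum>bc\<in>S1 \<times> S2. (c1 (fst bc) * mon (fst bc) x) * (c2 (snd bc) * mon (snd bc) x))"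
      by (intro sum.cong refl) (simp add: g_def mon_madd mult_ac)
    also have "\<dots> = (\<Sum>b\<in>S1. c1 b * mon b x) * (\<Sum>c\<in>S2. c2 c * mon c x)"
      by (simp add: sum_product sum.cartesian_product split_def)
    also have "\<dots> = p x * q x"
      using 1(3) 2(3) by simp
    finally show ?thesis by simp
  qed
  then show ?thesis unfolding hpoly_def using fS dS by blast
qed

lemma hpoly_sum:
  assumes "finite I" "\<And>i. i \<in> I \<Longrightarrow> hpoly d (p i)"
  shows "hpoly d (\<lambda>x. \<Sum>i\<in>I. p i x)"
  using assms by (induction I rule: finite_induct) (auto intro: hpoly_zero hpoly_add)

lemma hpoly_prod:
  assumes "finite I" "\<And>i. i \<in> I \<Longrightarrow> hpoly (dd i) (p i)"
  shows "hpoly (\<Sum>i\<in>I. dd i) (\<lambda>x. \<Prod>i\<in>I. p i x)"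
  using assms by (induction I rule: finite_induct) (auto intro: hpoly_const hpoly_mult)

lemma hpoly_power:
  assumes "hpoly d p" shows "hpoly (n * d) (\<lambda>x. p x ^ n)"
proof (induction n)
  case 0 then show ?case using hpoly_const by simp
next
  case (Suc n) then show ?case using hpoly_mult[OF assms Suc] by (simp add: mult.commute)
qed

lemma hpoly_ev: "is_triple d F \<Longrightarrow> hpoly d (\<lambda>x. ev F x $ i)"
  unfolding hpoly_def using ev_Md[of d F] finite_Md
  by (intro exI[of _ "\<lambda>a. F (i,a)"] exI[of _ "Md d"]) (auto simp: Md_def)

lemma ev_nonzero_coeff: "ev K x \<noteq> 0 \<Longrightarrow> \<exists>k. K k \<noteq> 0"
proof (rule ccontr)
  assume "ev K x \<noteq> 0" "\<not> (\<exists>k. K k \<noteq> 0)"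
  then show False by (simp add: ev_def vec_eq_iff)
qed

lemma triple_exists:
  assumes hp: "\<And>i. hpoly d (\<lambda>x. g x $ i)" and nz: "g xz \<noteq> 0"
  shows "\<exists>K. is_triple d K \<and> (\<forall>x. ev K x = g x)"
proof -
  have "\<forall>i. \<exists>c S. finite S \<and> (\<forall>a\<in>S. mdeg a = d) \<and> (\<forall>x. g x $ i = (\<Sum>a\<in>S. c a * mon a x))"
    using hp unfolding hpoly_def by blast
  then obtain cc SS where cS: "\<And>i. finite (SS i)" "\<And>i. \<forall>a\<in>SS i. mdeg a = d"
    "\<And>i x. g x $ i = (\<Sum>a\<in>SS i. cc i a * mon a x)"
    by metis
  define K where "K = (\<lambda>(i,a). if a \<in> SS i then cc i a else 0)"
  have ev: "ev K x = g x" for x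
  proof -
    have "ev K x $ i = g x $ i" for i
      by (subst ev_superset[of "SS i"]) (use cS in \<open>auto simp: K_def split: if_splits\<close>)
    then show ?thesis by (simp add: vec_eq_iff)
  qed
  have "is_triple d K"
    unfolding is_triple_def
  proof
    have "ev K xz \<noteq> 0" using ev nz by simp
    then show "\<exists>k. K k \<noteq> 0" by (rule ev_nonzero_coeff)
    show "\<forall>i a. K (i, a) \<noteq> 0 \<longrightarrow> mdeg a = d" using cS(2) by (auto simp: K_def split: if_splits)
  qed
  then show ?thesis using ev by blast
qed

lemma lin_supp: "(\<Sum>j\<in>UNIV. if a = ej j then A$i$j else 0) \<noteq> 0 \<Longrightarrow> a \<in> range ej"
proof (rule ccontr)
  assume "a \<notin> range ej"
  then have "(\<Sum>j\<in>UNIV. if a = ej j then A$i$j else 0) = 0" by (intro sum.neutral) auto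
  then show "(\<Sum>j\<in>UNIV. if a = ej j then A$i$j else 0) \<noteq> 0 \<Longrightarrow> False" by simp
qed

lemma ev_lin: "ev (lin_triple A) x = A *v x"
proof -
  have "ev (lin_triple A) x $ i = (A *v x) $ i" for i
  proof -
    have coef: "lin_triple A (i, ej j) = A$i$j" for j
    proof -
      have "lin_triple A (i, ej j) = (\<Sum>j'\<in>UNIV. if j' = j then A$i$j' else 0)"
        unfolding lin_triple_def ej_def[symmetric] using inj_ej by (auto intro!: sum.cong simp: inj_eq)
      then show ?thesis by simp
    qed
    have "ev (lin_triple A) x $ i = (\<Sum>a\<in>range ej. lin_triple A (i,a) * mon a x)"
      by (rule ev_superset) (use lin_supp in \<open>auto simp: lin_triple_def ej_def[symmetric]\<close>)
    also have "\<dots> = (\<Sum>j\<in>UNIV. A$i$j * x$j)"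
      by (subst sum.reindex[OF inj_ej]) (simp add: coef mon_ej)
    finally show ?thesis by (simp add: matrix_vector_mult_def)
  qed
  then show ?thesis by (simp add: vec_eq_iff)
qed

lemma is_triple_lin:
  assumes "A *v xz \<noteq> 0" shows "is_triple 1 (lin_triple A)"
  unfolding is_triple_def
proof
  show "\<exists>k. lin_triple A k \<noteq> 0" using ev_nonzero_coeff[of "lin_triple A" xz] ev_lin assms by simp
  show "\<forall>i a. lin_triple A (i, a) \<noteq> 0 \<longrightarrow> mdeg a = 1"
    using lin_supp by (force simp: lin_triple_def ej_def[symmetric] mdeg_ej)
qed

lemma hpoly_lin: "hpoly 1 (\<lambda>x. (A *v x) $ j)"
proof -
  have e: "(\<lambda>x. (A *v x)$j) = (\<lambda>x. \<Sum>k\<in>UNIV. A$j$k * x$k)" by (simp add: matrix_vector_mult_def)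
  show ?thesis unfolding e
  proof (rule hpoly_sum)
    fix k show "hpoly 1 (\<lambda>x. A$j$k * x$k)" by (rule hpoly_cmul[OF hpoly_var])
  qed simp
qed

lemma subst_exists:
  assumes G: "is_triple e G" and nz: "ev G (L *v xz) \<noteq> 0"
  shows "\<exists>J. is_triple e J \<and> (\<forall>x. ev J x = ev G (L *v x))"
proof (rule triple_exists[where g="\<lambda>x. ev G (L *v x)" and xz=xz])
  show "ev G (L *v xz) \<noteq> 0" by fact
next
  fix i
  have "hpoly e (\<lambda>x. \<Sum>a\<in>Md e. G (i,a) * (\<Prod>j\<in>UNIV. ((L *v x)$j) ^ a j))"
  proof (intro hpoly_sum hpoly_cmul finite_Md)
    fix a assume a: "a \<in> Md e"
    have "hpoly (\<Sum>j\<in>UNIV. a j * 1) (\<lambda>x. \<Prod>j\<in>UNIV. ((L *v x)$j) ^ a j)"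
      by (intro hpoly_prod hpoly_power hpoly_lin) auto
    then show "hpoly e (\<lambda>x. \<Prod>j\<in>UNIV. ((L *v x)$j) ^ a j)"
      using a by (simp add: Md_def mdeg_def)
  qed
  then show "hpoly e (\<lambda>x. ev G (L *v x) $ i)"
    by (simp add: ev_Md[OF G] mon_def)
qed

definition inv2 :: "complex^3^3 \<Rightarrow> complex^3^3 \<Rightarrow> bool" where
  "inv2 A A' \<longleftrightarrow> A ** A' = mat 1 \<and> A' ** A = mat 1"

definition piL :: "complex^3^3 \<Rightarrow> triple set" where "piL A = bir_of (lin_triple A)"

lemma inv2_sym: "inv2 A A' \<Longrightarrow> inv2 A' A" by (simp add: inv2_def)

lemma inv2_I: "A ** A' = mat 1 \<Longrightarrow> inv2 A A'"
  using matrix_left_right_inverse[of A A'] by (simp add: inv2_def)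

lemma inv2_mult: "inv2 A A' \<Longrightarrow> inv2 B B' \<Longrightarrow> inv2 (A ** B) (B' ** A')"
  unfolding inv2_def by (metis matrix_mul_assoc matrix_mul_rid)

lemma inv2_apply: "inv2 A A' \<Longrightarrow> A *v (A' *v x) = x" "inv2 A A' \<Longrightarrow> A' *v (A *v x) = x"
  by (simp_all add: inv2_def matrix_vector_mul_assoc)

lemma inv2_nonzero: "inv2 A A' \<Longrightarrow> v \<noteq> 0 \<Longrightarrow> A *v v \<noteq> 0"
  by (metis inv2_apply(2) matrix_vector_mult_0_right)

definition one3 :: "complex^3" where "one3 = (\<chi> i. 1)"
lemma one3_nz: "one3 \<noteq> 0" by (simp add: one3_def vec_eq_iff)

lemma lin_triple1: "inv2 A A' \<Longrightarrow> is_triple 1 (lin_triple A)"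
  by (rule is_triple_lin[of A "A' *v one3"]) (simp add: inv2_apply one3_nz)

lemma lin_inv_pair: "inv2 A A' \<Longrightarrow> inv_pair (lin_triple A) (lin_triple A')"
  unfolding inv_pair_def ev_lin using one3_nz by (auto simp: inv2_apply par_refl)

lemma pi_Bir: "inv2 A A' \<Longrightarrow> piL A \<in> Bir"
  unfolding piL_def
proof (rule Bir_intro[OF lin_triple1])
  fix c :: complex assume A: "inv2 A A'" and c: "c \<noteq> 0"
  show "birational (\<lambda>k. c * lin_triple A k)"
    by (rule birational_scaled[OF lin_triple1[OF A] lin_triple1[OF inv2_sym[OF A]] lin_inv_pair[OF A] lin_inv_pair[OF inv2_sym[OF A]] c])
qed auto

lemma inv2_mat1: "inv2 (mat 1) (mat 1)" by (simp add: inv2_def)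

lemma bir_id_pi: "bir_id = piL (mat 1)" by (simp add: bir_id_def piL_def)

lemma pi_comp: "inv2 A A' \<Longrightarrow> inv2 B B' \<Longrightarrow> bir_comp (piL A) (piL B) = piL (A ** B)"
  unfolding piL_def
  by (rule bir_comp_eq[OF lin_triple1 _ lin_triple1 lin_triple1[OF inv2_mult]])
     (auto simp: ev_lin matrix_vector_mul_assoc intro: pi_Bir[unfolded piL_def] inv2_mult)

lemma bir_inv_pi:
  assumes A: "inv2 A A'"
  shows "bir_inv (piL A) = piL A'"
  unfolding bir_inv_def
proof (rule the_equality)
  show "piL A' \<in> Bir \<and> bir_comp (piL A) (piL A') = bir_id"
    using pi_Bir[OF inv2_sym[OF A]] pi_comp[OF A inv2_sym[OF A]] A
    by (simp add: inv2_def bir_id_pi)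
next
  fix \<psi> assume \<psi>: "\<psi> \<in> Bir \<and> bir_comp (piL A) \<psi> = bir_id"
  then obtain e G where G: "e \<ge> 1" "is_triple e G" "birational G" "\<psi> = bir_of G"
    using Bir_elim by metis
  then obtain e2 G2 where G2: "is_triple e2 G2" "inv_pair G G2" "inv_pair G2 G"
    unfolding birational_def by blast
  obtain y0 where y0: "ev G y0 \<noteq> 0" using exists_nonzero[OF G(2)] by blast
  obtain K0 where K0: "is_triple e K0" "\<And>x. ev K0 x = A *v ev G x"
  proof -
    have "\<exists>K. is_triple e K \<and> (\<forall>x. ev K x = A *v ev G x)"
    proof (rule triple_exists[where g="\<lambda>x. A *v ev G x" and xz=y0])
      fix i
      have "hpoly e (\<lambda>x. \<Sum>j\<in>UNIV. A$i$j * ev G x $ j)"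
        by (rule hpoly_sum) (auto intro: hpoly_cmul hpoly_ev[OF G(2)])
      then show "hpoly e (\<lambda>x. (A *v ev G x) $ i)" by (simp add: matrix_vector_mult_def)
      show "A *v ev G y0 \<noteq> 0" using inv2_nonzero[OF A y0] .
    qed
    then show ?thesis using that by blast
  qed
  obtain z0 where z0: "ev G2 z0 \<noteq> 0" using exists_nonzero[OF G2(1)] by blast
  obtain J where J: "is_triple e2 J" "\<And>x. ev J x = ev G2 (A' *v x)"
    using subst_exists[OF G2(1), of A' "A *v z0"] z0 A by (auto simp: inv2_apply)
  have ip1: "inv_pair K0 J"
    unfolding inv_pair_def
  proof
    obtain y where y: "ev G (ev G2 y) \<noteq> 0" using G2(2) unfolding inv_pair_def by blast
    show "\<exists>x. ev K0 (ev J x) \<noteq> 0"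
      by (rule exI[of _ "A *v y"]) (simp add: K0(2) J(2) inv2_apply[OF A] inv2_nonzero[OF A y])
    show "\<forall>x. par (ev K0 (ev J x)) x"
    proof
      fix x
      have "par (ev G (ev G2 (A' *v x))) (A' *v x)" using G2(2) unfolding inv_pair_def by blast
      from par_lin[OF this, of A] show "par (ev K0 (ev J x)) x"
        by (simp add: K0(2) J(2) inv2_apply[OF A])
    qed
  qed
  have ip2: "inv_pair J K0"
    using G2(3) unfolding inv_pair_def by (simp add: K0(2) J(2) inv2_apply[OF A])
  have K0B: "bir_of K0 \<in> Bir"
    using G(1) K0(1) by (intro Bir_intro birational_scaled[OF K0(1) J(1) ip1 ip2]) auto
  have "bir_comp (piL A) \<psi> = bir_of K0"
    unfolding piL_def G(4)
    by (rule bir_comp_eq[OF lin_triple1[OF A] _ G(2) K0(1)]) (auto simp: ev_lin K0(2) K0B)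
  then have "bir_of K0 = bir_of (lin_triple (mat 1))" using \<psi> by (simp add: bir_id_def)
  then have "par (ev K0 x) x" for x
    using bir_of_eq_imp_par[OF lin_triple1[OF inv2_mat1]] by (simp add: ev_lin)
  then have "par (ev G x) (ev (lin_triple A') x)" for x
    using par_lin[of "ev K0 x" x A'] by (simp add: K0(2) inv2_apply[OF A] ev_lin)
  then show "\<psi> = piL A'"
    unfolding G(4) piL_def by (rule par_eq_bir_of[OF G(2) lin_triple1[OF inv2_sym[OF A]]])
qed

definition cmul :: "complex \<Rightarrow> complex^3^3 \<Rightarrow> complex^3^3" where
  "cmul c A = (\<chi> i j. c * A$i$j)"

lemma ax: "(axis j 1 :: complex^3)$i = (if i = j then 1 else 0)" by (simp add: axis_def)

lemma axis_mult: "(R *v axis j 1) $ i = R$i$j"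
  by (simp add: matrix_vector_mult_def axis_def if_distrib cong: if_cong)

lemma par_all_scalar:
  assumes "\<And>x. par x (R *v x)"
  shows "R = cmul (R$0$0) (mat 1)"
proof -
  have off: "R$i$j = 0" if "i \<noteq> j" for i j
  proof -
    have "par (axis j 1) (R *v axis j 1)" by fact
    then have "(axis j 1 :: complex^3)$j * (R *v axis j 1)$i = (axis j 1 :: complex^3)$i * (R *v axis j 1)$j"
      unfolding par_def by metis
    then show ?thesis using that by (simp add: axis_mult ax)
  qed
  have dg: "R$i$i = R$j$j" for i j
  proof (cases "i = j")
    case False
    have "par (axis i 1 + axis j 1) (R *v (axis i 1 + axis j 1))" by fact
    then have "(axis i 1 + axis j 1 :: complex^3)$i * (R *v (axis i 1 + axis j 1))$j =
      (axis i 1 + axis j 1 :: complex^3)$j * (R *v (axis i 1 + axis j 1))$i"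
      unfolding par_def by metis
    then show ?thesis using False off
      by (simp add: matrix_vector_right_distrib axis_mult ax)
  qed simp
  have "R$i$j = (cmul (R$0$0) (mat 1))$i$j" for i j
  proof (cases "i = j")
    case True then show ?thesis using dg[of i 0] by (simp add: cmul_def mat_def)
  next
    case False then show ?thesis using off[OF False] by (simp add: cmul_def mat_def)
  qed
  then show ?thesis unfolding vec_eq_iff by blast
qed

lemma pi_inj:
  assumes A: "inv2 A Ai" and B: "inv2 B Bi" and eq: "piL A = piL B"
  shows "B = cmul (((Ai ** B))$0$0) A"
proof -
  have "par (A *v x) (B *v x)" for x
    using bir_of_eq_imp_par[OF lin_triple1[OF B] eq[unfolded piL_def]] by (simp add: ev_lin)
  then have "par x ((Ai ** B) *v x)" for x
    using par_lin[of "A *v x" "B *v x" Ai] A by (simp add: inv2_def matrix_vector_mul_assoc)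
  then have R: "Ai ** B = cmul ((Ai ** B)$0$0) (mat 1)" by (rule par_all_scalar)
  have "B = A ** (Ai ** B)" using A by (simp add: inv2_def matrix_mul_assoc)
  also have "\<dots> = cmul ((Ai ** B)$0$0) A"
    by (subst R) (simp add: cmul_def matrix_matrix_mult_def mat_def vec_eq_iff if_distrib cong: if_cong)
  finally show ?thesis .
qed

lemma num3 [simp]: "(0::3) \<noteq> 1" "(1::3) \<noteq> 0" "(0::3) \<noteq> 2" "(2::3) \<noteq> 0" "(1::3) \<noteq> 2" "(2::3) \<noteq> 1"
  by simp_all

lemma swap3: "(\<Sum>j\<in>A. \<Sum>k\<in>B. \<Sum>l\<in>C. g j k l) = (\<Sum>l\<in>C. \<Sum>j\<in>A. \<Sum>k\<in>B. g j k l)"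
proof -
  have "(\<Sum>j\<in>A. \<Sum>k\<in>B. \<Sum>l\<in>C. g j k l) = (\<Sum>j\<in>A. \<Sum>l\<in>C. \<Sum>k\<in>B. g j k l)"
    by (intro sum.cong refl) (rule sum.swap)
  also have "\<dots> = (\<Sum>l\<in>C. \<Sum>j\<in>A. \<Sum>k\<in>B. g j k l)" by (rule sum.swap)
  finally show ?thesis .
qed

lemma swap4: "(\<Sum>j\<in>A. \<Sum>k\<in>B. \<Sum>p\<in>C. \<Sum>q\<in>D. g j k p q) = (\<Sum>p\<in>C. \<Sum>q\<in>D. \<Sum>j\<in>A. \<Sum>k\<in>B. g j k p q)"
proof -
  have "(\<Sum>j\<in>A. \<Sum>k\<in>B. \<Sum>p\<in>C. \<Sum>q\<in>D. g j k p q) = (\<Sum>p\<in>C. \<Sum>j\<in>A. \<Sum>k\<in>B. \<Sum>q\<in>D. g j k p q)"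
    by (rule swap3)
  also have "\<dots> = (\<Sum>p\<in>C. \<Sum>q\<in>D. \<Sum>j\<in>A. \<Sum>k\<in>B. g j k p q)"
    by (intro sum.cong refl) (rule swap3)
  finally show ?thesis .
qed

definition quad :: "(3 \<Rightarrow> 3 \<Rightarrow> 3 \<Rightarrow> complex) \<Rightarrow> triple" where
  "quad Q = (\<lambda>(i,a). \<Sum>j\<in>UNIV. \<Sum>k\<in>UNIV. if a = madd (ej j) (ej k) then Q i j k else 0)"

definition m2 :: "3 \<Rightarrow> 3 \<Rightarrow> mono" where "m2 j k = madd (ej j) (ej k)"

lemma m2_in: "m2 j k \<in> range (case_prod m2)"
  by (rule image_eqI[of _ _ "(j,k)"]) auto

lemma if0_mult: "(if P then a else 0) * b = (if P then a * b else (0::complex))" by simp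

lemma quad_supp: "quad Q (i,a) \<noteq> 0 \<Longrightarrow> a \<in> range (case_prod m2)"
proof (rule ccontr)
  assume "a \<notin> range (case_prod m2)"
  then have "quad Q (i,a) = 0" unfolding quad_def m2_def[symmetric]
    using m2_in by (auto intro!: sum.neutral)
  then show "quad Q (i,a) \<noteq> 0 \<Longrightarrow> False" by simp
qed

lemma ev_quad: "ev (quad Q) x $ i = (\<Sum>j\<in>UNIV. \<Sum>k\<in>UNIV. Q i j k * (x$j * x$k))"
proof -
  let ?S = "range (case_prod m2)"
  have "ev (quad Q) x $ i = (\<Sum>a\<in>?S. quad Q (i,a) * mon a x)"
    by (rule ev_superset) (use quad_supp in auto)
  also have "\<dots> = (\<Sum>a\<in>?S. \<Sum>j\<in>UNIV. \<Sum>k\<in>UNIV. if a = m2 j k then Q i j k * mon a x else 0)"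
    unfolding quad_def m2_def[symmetric] by (simp add: sum_distrib_right if0_mult)
  also have "\<dots> = (\<Sum>j\<in>UNIV. \<Sum>k\<in>UNIV. \<Sum>a\<in>?S. if a = m2 j k then Q i j k * mon a x else 0)"
    by (rule swap3[symmetric])
  also have "\<dots> = (\<Sum>j\<in>UNIV. \<Sum>k\<in>UNIV. Q i j k * mon (m2 j k) x)"
    by (intro sum.cong refl) (simp add: sum.delta' m2_in)
  also have "\<dots> = (\<Sum>j\<in>UNIV. \<Sum>k\<in>UNIV. Q i j k * (x$j * x$k))"
    by (simp add: m2_def mon_madd mon_ej)
  finally show ?thesis .
qed

lemma mdeg_m2: "mdeg (m2 j k) = 2"
  by (simp add: m2_def mdeg_madd mdeg_ej)

lemma is_triple_quad: "ev (quad Q) xz \<noteq> 0 \<Longrightarrow> is_triple 2 (quad Q)"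
  unfolding is_triple_def
proof
  show "ev (quad Q) xz \<noteq> 0 \<Longrightarrow> \<exists>k. quad Q k \<noteq> 0" by (rule ev_nonzero_coeff)
  show "\<forall>i a. quad Q (i, a) \<noteq> 0 \<longrightarrow> mdeg a = 2" using quad_supp mdeg_m2 by fastforce
qed

definition E :: "complex \<Rightarrow> 3 \<Rightarrow> 3 \<Rightarrow> 3 \<Rightarrow> complex" where
  "E c l p q = (if l = 0 then (if p = 0 \<and> q = 0 then 1 else 0)
     else if l = 1 then (if p = 0 \<and> q = 1 then 1 else 0)
     else (if p = 0 \<and> q = 2 then 1 else 0) + (if p = 1 \<and> q = 1 then c else 0))"

definition Fq :: "complex \<Rightarrow> complex^3 \<Rightarrow> complex^3" where
  "Fq c y = (\<chi> l. \<Sum>p\<in>UNIV. \<Sum>q\<in>UNIV. E c l p q * (y$p * y$q))"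

lemma Fq_nth0: "Fq c y $ 0 = y$0 * y$0"
  by (simp add: Fq_def E_def sum3)
lemma Fq_nth: "Fq c y $ 0 = y$0 * y$0" "Fq c y $ 1 = y$0 * y$1" "Fq c y $ 2 = y$0 * y$2 + c * (y$1 * y$1)"
  by (simp_all add: Fq_def E_def sum3)

lemma vec3_eqI: "(u::complex^3)$0 = v$0 \<Longrightarrow> u$1 = v$1 \<Longrightarrow> u$2 = v$2 \<Longrightarrow> u = v"
  unfolding vec_eq_iff using three_cases by metis
lemma Fq_inv: "Fq c (Fq (-c) y) = (y$0^3) *s y"
  by (rule vec3_eqI) (simp_all add: Fq_nth algebra_simps power3_eq_cube)

lemma Fq_e0: "Fq c (axis 0 1) = axis 0 1"
  by (rule vec3_eqI) (simp_all add: Fq_nth ax)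

lemma Fq_scale: "Fq c (u *s y) = (u^2) *s Fq c y"
  by (rule vec3_eqI) (simp_all add: Fq_nth algebra_simps power2_eq_square)

definition QP :: "complex^3^3 \<Rightarrow> complex^3^3 \<Rightarrow> complex \<Rightarrow> 3 \<Rightarrow> 3 \<Rightarrow> 3 \<Rightarrow> complex" where
  "QP L R c = (\<lambda>i j k. \<Sum>l\<in>UNIV. \<Sum>p\<in>UNIV. \<Sum>q\<in>UNIV. L$i$l * E c l p q * R$p$j * R$q$k)"

definition Phi :: "complex^3^3 \<Rightarrow> complex^3^3 \<Rightarrow> complex \<Rightarrow> triple" where
  "Phi L R c = quad (QP L R c)"

lemma ev_Phi: "ev (Phi L R c) x = L *v Fq c (R *v x)"
proof -
  have "ev (Phi L R c) x $ i = (L *v Fq c (R *v x)) $ i" for i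
  proof -
    have "ev (Phi L R c) x $ i = (\<Sum>j\<in>UNIV. \<Sum>k\<in>UNIV. \<Sum>l\<in>UNIV. \<Sum>p\<in>UNIV. \<Sum>q\<in>UNIV.
        L$i$l * E c l p q * R$p$j * R$q$k * (x$j * x$k))"
      by (simp add: Phi_def ev_quad QP_def sum_distrib_right)
    also have "\<dots> = (\<Sum>l\<in>UNIV. \<Sum>j\<in>UNIV. \<Sum>k\<in>UNIV. \<Sum>p\<in>UNIV. \<Sum>q\<in>UNIV.
        L$i$l * E c l p q * R$p$j * R$q$k * (x$j * x$k))"
      by (rule swap3)
    also have "\<dots> = (\<Sum>l\<in>UNIV. \<Sum>p\<in>UNIV. \<Sum>q\<in>UNIV. \<Sum>j\<in>UNIV. \<Sum>k\<in>UNIV.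
        L$i$l * E c l p q * R$p$j * R$q$k * (x$j * x$k))"
      by (rule sum.cong[OF refl], rule swap4)
    also have "\<dots> = (\<Sum>l\<in>UNIV. \<Sum>p\<in>UNIV. \<Sum>q\<in>UNIV. L$i$l * (E c l p q *
         ((\<Sum>j\<in>UNIV. R$p$j * x$j) * (\<Sum>k\<in>UNIV. R$q$k * x$k))))"
      by (intro sum.cong refl) (simp only: sum_product, simp add: sum_distrib_left mult_ac)
    also have "\<dots> = (L *v Fq c (R *v x)) $ i"
      unfolding matrix_vector_mult_def Fq_def by (simp add: sum_distrib_left)
    finally show ?thesis .
  qed
  then show ?thesis by (simp add: vec_eq_iff)
qed

lemma mv_smult: "A *v (c *s x) = c *s (A *v (x::complex^3))"
  by (simp add: vec_eq_iff matrix_vector_mult_def sum_distrib_left mult_ac)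

lemma e0_nz: "(axis 0 1 :: complex^3) \<noteq> 0"
  by (simp add: vec_eq_iff ax)

lemma Phi_triple:
  assumes "inv2 L Li" "inv2 R Ri" shows "is_triple 2 (Phi L R c)"
  unfolding Phi_def
proof (rule is_triple_quad[of _ "Ri *v axis 0 1"])
  show "ev (quad (QP L R c)) (Ri *v axis 0 1) \<noteq> 0"
    using ev_Phi[unfolded Phi_def, of L R c] assms
    by (simp add: inv2_apply Fq_e0 inv2_nonzero[OF assms(1) e0_nz])
qed

lemma Fq_inv': "Fq (-c) (Fq c y) = (y$0^3) *s y"
  using Fq_inv[of "-c" y] by simp

lemma Phi_inv_pair:
  assumes L: "inv2 L Li" and R: "inv2 R Ri"
  shows "inv_pair (Phi L R c) (Phi Ri Li (-c))"
  unfolding inv_pair_def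
proof
  have ev: "ev (Phi L R c) (ev (Phi Ri Li (-c)) x) = ((Li *v x)$0^3) *s x" for x
    by (simp add: ev_Phi inv2_apply[OF R] Fq_inv mv_smult inv2_apply[OF L])
  show "\<exists>x. ev (Phi L R c) (ev (Phi Ri Li (- c)) x) \<noteq> 0"
    by (rule exI[of _ "L *v axis 0 1"]) (simp add: ev inv2_apply[OF L] ax inv2_nonzero[OF L e0_nz])
  show "\<forall>x. par (ev (Phi L R c) (ev (Phi Ri Li (- c)) x)) x"
    by (simp add: ev par_scale_left par_refl)
qed

lemma Phi_Bir:
  assumes L: "inv2 L Li" and R: "inv2 R Ri"
  shows "bir_of (Phi L R c) \<in> Bir"
proof (rule Bir_intro[OF Phi_triple[OF L R]])
  fix k :: complex assume k: "k \<noteq> 0"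
  have ip2: "inv_pair (Phi Ri Li (-c)) (Phi L R c)"
    using Phi_inv_pair[OF inv2_sym[OF R] inv2_sym[OF L], of "-c"] by simp
  show "birational (\<lambda>x. k * Phi L R c x)"
    by (rule birational_scaled[OF Phi_triple[OF L R] Phi_triple[OF inv2_sym[OF R] inv2_sym[OF L]]
          Phi_inv_pair[OF L R] ip2 k])
qed simp

lemma ex3_at [simp]: "ex3 a b c 0 = a" "ex3 a b c 1 = b" "ex3 a b c 2 = c"
  by (simp_all add: ex3_def)

lemma ex3_eq: "ex3 a b c = ex3 a' b' c' \<longleftrightarrow> a = a' \<and> b = b' \<and> c = c'"
  using mono_eq3[of "ex3 a b c" "ex3 a' b' c'"] by simp

lemma mon_ex3: "mon (ex3 a b c) y = y$0^a * y$1^b * y$2^c"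
  by (simp add: mon3)

lemma mdeg_ex3: "mdeg (ex3 a b c) = a + b + c"
  by (simp add: mdeg_def sum3)

definition S4 :: "mono set" where "S4 = {ex3 2 0 0, ex3 1 1 0, ex3 1 0 1, ex3 0 2 0}"

lemma ftr_supp: "ftr t (i,a) \<noteq> 0 \<Longrightarrow> a \<in> S4"
  by (auto simp: ftr_def S4_def split: if_splits)

definition cc :: "real \<Rightarrow> complex" where "cc t = complex_of_real (t * (1 - t))"

lemma ev_ftr: "ev (ftr t) y = Fq (cc t) y"
proof -
  have e: "ev (ftr t) y $ i = (\<Sum>a\<in>S4. ftr t (i,a) * mon a y)" for i
    by (rule ev_superset) (auto simp: S4_def dest: ftr_supp)
  have s: "(\<Sum>a\<in>S4. g a) = g (ex3 2 0 0) + g (ex3 1 1 0) + g (ex3 1 0 1) + g (ex3 0 2 0)" for g :: "mono \<Rightarrow> complex"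
    by (simp add: S4_def ex3_eq add.assoc)
  show ?thesis
    by (rule vec3_eqI; simp only: e s; simp add: ftr_def ex3_eq mon_ex3 Fq_nth cc_def power2_eq_square)
qed

lemma ftr_triple: "is_triple 2 (ftr t)"
  unfolding is_triple_def
proof
  have "ev (ftr t) (axis 0 1) \<noteq> 0" by (simp add: ev_ftr Fq_e0 e0_nz)
  then show "\<exists>k. ftr t k \<noteq> 0" by (rule ev_nonzero_coeff)
  show "\<forall>i a. ftr t (i, a) \<noteq> 0 \<longrightarrow> mdeg a = 2"
  proof (intro allI impI)
    fix i a assume "ftr t (i, a) \<noteq> 0"
    then have "a \<in> S4" by (rule ftr_supp)
    then show "mdeg a = 2" unfolding S4_def by (auto simp: mdeg_ex3)
  qed
qed

lemma conj_eq:
  assumes X: "inv2 X Xi"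
  shows "bir_comp (piL X) (bir_comp (f t) (bir_inv (piL X))) = bir_of (Phi X Xi (cc t))"
proof -
  have I: "inv2 (mat 1) (mat 1)" by (rule inv2_mat1)
  have 1: "bir_comp (f t) (piL Xi) = bir_of (Phi (mat 1) Xi (cc t))"
    unfolding f_def piL_def
    by (rule bir_comp_eq[OF ftr_triple _ lin_triple1[OF inv2_sym[OF X]] Phi_triple[OF I inv2_sym[OF X]]])
       (simp_all add: ev_Phi ev_ftr ev_lin Phi_Bir[OF I inv2_sym[OF X]])
  have 2: "bir_comp (piL X) (bir_of (Phi (mat 1) Xi (cc t))) = bir_of (Phi X Xi (cc t))"
    unfolding piL_def
    by (rule bir_comp_eq[OF lin_triple1[OF X] _ Phi_triple[OF I inv2_sym[OF X]] Phi_triple[OF X inv2_sym[OF X]]])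
       (simp_all add: ev_Phi ev_lin Phi_Bir[OF X inv2_sym[OF X]])
  show ?thesis using bir_inv_pi[OF X] 1 2 by simp
qed

lemma istop_quot: "istopology (\<lambda>U. U \<subseteq> g ` topspace X \<and> openin X {x \<in> topspace X. g x \<in> U})"
  unfolding istopology_def
proof (rule conjI; intro allI impI)
  fix S T assume "S \<subseteq> g ` topspace X \<and> openin X {x \<in> topspace X. g x \<in> S}"
    "T \<subseteq> g ` topspace X \<and> openin X {x \<in> topspace X. g x \<in> T}"
  moreover have "{x \<in> topspace X. g x \<in> S \<inter> T} = {x \<in> topspace X. g x \<in> S} \<inter> {x \<in> topspace X. g x \<in> T}" by auto
  ultimately show "S \<inter> T \<subseteq> g ` topspace X \<and> openin X {x \<in> topspace X. g x \<in> S \<inter> T}" by auto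
next
  fix KK assume K: "\<forall>K\<in>KK. K \<subseteq> g ` topspace X \<and> openin X {x \<in> topspace X. g x \<in> K}"
  have "{x \<in> topspace X. g x \<in> \<Union>KK} = (\<Union>K\<in>KK. {x \<in> topspace X. g x \<in> K})" by auto
  then show "\<Union>KK \<subseteq> g ` topspace X \<and> openin X {x \<in> topspace X. g x \<in> \<Union>KK}"
    using K by auto
qed

lemma openin_quot: "openin (quot_top X g) U \<longleftrightarrow> U \<subseteq> g ` topspace X \<and> openin X {x \<in> topspace X. g x \<in> U}"
  unfolding quot_top_def topology_inverse'[OF istop_quot] ..

lemma topspace_quot: "topspace (quot_top X g) = g ` topspace X"
proof -
  have e: "{x \<in> topspace X. g x \<in> g ` topspace X} = topspace X" by auto
  have "openin (quot_top X g) (g ` topspace X)"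
    unfolding openin_quot e by simp
  then have "g ` topspace X \<subseteq> topspace (quot_top X g)" by (rule openin_subset)
  moreover have "topspace (quot_top X g) \<subseteq> g ` topspace X"
    unfolding topspace_def openin_quot by auto
  ultimately show ?thesis by blast
qed

lemma istop_bir: "istopology (\<lambda>U. U \<subseteq> Bir \<and> (\<forall>d\<ge>1. openin (Bir_le_top d) (U \<inter> Bir_le d)))"
  unfolding istopology_def
proof (rule conjI; intro allI impI)
  fix S T assume "S \<subseteq> Bir \<and> (\<forall>d\<ge>1. openin (Bir_le_top d) (S \<inter> Bir_le d))"
    "T \<subseteq> Bir \<and> (\<forall>d\<ge>1. openin (Bir_le_top d) (T \<inter> Bir_le d))"
  moreover have "S \<inter> T \<inter> Bir_le d = (S \<inter> Bir_le d) \<inter> (T \<inter> Bir_le d)" for d by auto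
  ultimately show "S \<inter> T \<subseteq> Bir \<and> (\<forall>d\<ge>1. openin (Bir_le_top d) (S \<inter> T \<inter> Bir_le d))" by auto
next
  fix KK assume K: "\<forall>K\<in>KK. K \<subseteq> Bir \<and> (\<forall>d\<ge>1. openin (Bir_le_top d) (K \<inter> Bir_le d))"
  have e: "\<Union>KK \<inter> Bir_le d = (\<Union>K\<in>KK. K \<inter> Bir_le d)" for d by auto
  have "\<forall>d\<ge>1. openin (Bir_le_top d) (\<Union>KK \<inter> Bir_le d)"
  proof (intro allI impI)
    fix d :: nat assume d: "d \<ge> 1"
    show "openin (Bir_le_top d) (\<Union>KK \<inter> Bir_le d)"
      unfolding e[of d] using K d by (intro openin_Union) auto
  qed
  then show "\<Union>KK \<subseteq> Bir \<and> (\<forall>d\<ge>1. openin (Bir_le_top d) (\<Union>KK \<inter> Bir_le d))"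
    using K by auto
qed

lemma openin_bir: "openin bir_top U \<longleftrightarrow> U \<subseteq> Bir \<and> (\<forall>d\<ge>1. openin (Bir_le_top d) (U \<inter> Bir_le d))"
  unfolding bir_top_def topology_inverse'[OF istop_bir] ..

lemma topspace_W: "topspace (W_top d) = W d"
  by (simp add: W_top_def topspace_quot W_def)

lemma H_sub_W: "H d \<subseteq> W d" by (auto simp: H_def)

lemma topspace_H: "topspace (H_top d) = H d"
  using H_sub_W by (auto simp: H_top_def topspace_W)

lemma topspace_Bir_le: "topspace (Bir_le_top d) = Bir_le d"
  by (simp add: Bir_le_top_def topspace_quot topspace_H Bir_le_def)

lemma Bir_le_sub: "d \<ge> 1 \<Longrightarrow> Bir_le d \<subseteq> Bir" by (auto simp: Bir_def)

lemma topspace_bir: "topspace bir_top = Bir"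
proof -
  have "openin bir_top Bir"
    unfolding openin_bir
  proof (intro conjI allI impI subset_refl)
    fix d :: nat assume "d \<ge> 1"
    then have "Bir \<inter> Bir_le d = topspace (Bir_le_top d)" using Bir_le_sub topspace_Bir_le by auto
    then show "openin (Bir_le_top d) (Bir \<inter> Bir_le d)" by simp
  qed
  then have "Bir \<subseteq> topspace bir_top" by (rule openin_subset)
  moreover have "topspace bir_top \<subseteq> Bir" unfolding topspace_def openin_bir by auto
  ultimately show ?thesis by blast
qed

lemma bir_of_cls_proj: "bir_of_cls (proj_cls K) = bir_of K"
proof -
  have "K \<in> proj_cls K" unfolding proj_cls_def by (intro CollectI exI[of _ 1]) auto
  then have "(SOME F. F \<in> proj_cls K) \<in> proj_cls K" using someI[of "\<lambda>F. F \<in> proj_cls K" K] by blast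
  then obtain c where c: "c \<noteq> 0" "(SOME F. F \<in> proj_cls K) = (\<lambda>k. c * K k)"
    unfolding proj_cls_def by auto
  show ?thesis unfolding bir_of_cls_def c(2) by (rule bir_of_scale[OF ev_cmul[OF c(1)] c(1)])
qed

lemma open_pull:
  assumes U: "openin bir_top U" and d: "d \<ge> 1"
  obtains G where "open G" "\<And>K. K \<in> triples d \<Longrightarrow> proj_cls K \<in> H d \<Longrightarrow> (K \<in> G \<longleftrightarrow> bir_of K \<in> U)"
proof -
  have "openin (Bir_le_top d) (U \<inter> Bir_le d)" using U d by (simp add: openin_bir)
  then have "openin (H_top d) {P \<in> H d. bir_of_cls P \<in> U \<inter> Bir_le d}"
    unfolding Bir_le_top_def openin_quot topspace_H by simp
  then obtain T where T: "openin (W_top d) T" "{P \<in> H d. bir_of_cls P \<in> U \<inter> Bir_le d} = T \<inter> H d"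
    unfolding H_top_def openin_subtopology by blast
  then have "openin (top_of_set (triples d)) {K \<in> triples d. proj_cls K \<in> T}"
    unfolding W_top_def openin_quot by simp
  then obtain G where G: "open G" "{K \<in> triples d. proj_cls K \<in> T} = triples d \<inter> G"
    unfolding openin_open by blast
  show ?thesis
  proof (rule that[OF G(1)])
    fix K assume K: "K \<in> triples d" "proj_cls K \<in> H d"
    have B: "bir_of_cls (proj_cls K) \<in> Bir_le d" using K(2) by (auto simp: Bir_le_def)
    have "K \<in> {K \<in> triples d. proj_cls K \<in> T} \<longleftrightarrow> K \<in> triples d \<inter> G" using G(2) by simp
    then have "K \<in> G \<longleftrightarrow> proj_cls K \<in> T" using K(1) by simp
    also have "\<dots> \<longleftrightarrow> proj_cls K \<in> T \<inter> H d" using K(2) by simp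
    also have "\<dots> \<longleftrightarrow> proj_cls K \<in> {P \<in> H d. bir_of_cls P \<in> U \<inter> Bir_le d}" using T(2) by simp
    also have "\<dots> \<longleftrightarrow> bir_of K \<in> U" using K(2) B by (simp add: bir_of_cls_proj)
    finally show "K \<in> G \<longleftrightarrow> bir_of K \<in> U" .
  qed
qed

definition U3 :: "(complex^3^3) set" where "U3 = {A. A ** cstar A = mat 1}"

lemma U3_inv2: "A \<in> U3 \<Longrightarrow> inv2 A (cstar A)"
  by (rule inv2_I) (simp add: U3_def)

definition evd :: "nat \<Rightarrow> triple \<Rightarrow> complex^3 \<Rightarrow> complex^3" where
  "evd d K x = (\<chi> i. \<Sum>a\<in>Md d. K (i,a) * mon a x)"

lemma evd_ev: "is_triple d K \<Longrightarrow> evd d K x = ev K x"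
  by (simp add: evd_def vec_eq_iff ev_Md)

lemma continuous_on_vnth [continuous_intros]:
  "continuous_on S g \<Longrightarrow> continuous_on S (\<lambda>x. g x $ i)"
  unfolding continuous_on_def by (auto intro: tendsto_vec_nth)

lemma cont_fst_coord: "continuous_on S (\<lambda>x. fst x k :: 'b::topological_space)"
  by (rule continuous_on_product_then_coordinatewise[OF continuous_on_fst[OF continuous_on_id]])

lemma closed_F:
  assumes C: "compact C"
  shows "closed {K. \<exists>A\<in>C. \<forall>x. par (evd d K x) (A *v x)}"
proof -
  let ?F = "{K. \<exists>A\<in>C. \<forall>x. par (evd d K x) (A *v x)}"
  let ?W = "{KA :: triple \<times> (complex^3^3). \<exists>x. \<not> par (evd d (fst KA) x) (snd KA *v x)}"
  have cont: "continuous_on UNIV (\<lambda>KA :: triple \<times> (complex^3^3). (evd d (fst KA) x)$i * (snd KA *v x)$j)" for x i j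
    unfolding evd_def matrix_vector_mult_def
    by (simp, intro continuous_intros cont_fst_coord)
  have "?W = (\<Union>x. \<Union>i. \<Union>j. {KA. (evd d (fst KA) x)$i * (snd KA *v x)$j \<noteq> (evd d (fst KA) x)$j * (snd KA *v x)$i})"
    by (auto simp: par_def)
  moreover have oS: "open {KA :: triple \<times> (complex^3^3). (evd d (fst KA) x)$i * (snd KA *v x)$j \<noteq> (evd d (fst KA) x)$j * (snd KA *v x)$i}" for x i j
    by (intro open_Collect_neq cont)
  moreover have "open (\<Union>x. \<Union>i. \<Union>j. {KA :: triple \<times> (complex^3^3). (evd d (fst KA) x)$i * (snd KA *v x)$j \<noteq> (evd d (fst KA) x)$j * (snd KA *v x)$i})"
    by (intro open_UN ballI oS)
  ultimately have W: "open ?W" by simp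
  have "open (- ?F)"
  proof (subst open_subopen, intro ballI)
    fix K assume "K \<in> - ?F"
    then have "{K} \<times> C \<subseteq> ?W" by auto
    then obtain X0 where X0: "K \<in> X0" "open X0" "X0 \<times> C \<subseteq> ?W" using Elementary_Topology.tube_lemma[OF C W] by blast
    have "X0 \<subseteq> - ?F" using X0(3) by fastforce
    then show "\<exists>T. open T \<and> K \<in> T \<and> T \<subseteq> - ?F" using X0 by blast
  qed
  then show ?thesis by (simp add: closed_def)
qed

lemma Tc_char:
  assumes C: "C \<subseteq> U3" and K: "K \<in> triples d" and d: "d \<ge> 1"
  shows "(proj_cls K \<in> H d \<and> bir_of K \<in> piL ` C) \<longleftrightarrow> (\<exists>A\<in>C. \<forall>x. par (evd d K x) (A *v x))"
proof
  assume "proj_cls K \<in> H d \<and> bir_of K \<in> piL ` C"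
  then obtain A where A: "A \<in> C" "bir_of K = piL A" by auto
  have Kt: "is_triple d K" using K by (simp add: triples_def)
  have "K \<in> bir_of (lin_triple A)" using mem_bir_of_self[OF Kt] A(2) by (simp add: piL_def)
  then have "par (A *v x) (ev K x)" for x by (auto simp: bir_of_def ev_lin)
  then show "\<exists>A\<in>C. \<forall>x. par (evd d K x) (A *v x)" using A(1) evd_ev[OF Kt] par_sym by metis
next
  assume "\<exists>A\<in>C. \<forall>x. par (evd d K x) (A *v x)"
  then obtain A where A: "A \<in> C" "\<And>x. par (evd d K x) (A *v x)" by blast
  have Kt: "is_triple d K" using K by (simp add: triples_def)
  have Ai: "inv2 A (cstar A)" using A(1) C U3_inv2 by auto
  have par: "par (ev K x) (A *v x)" for x using A(2) evd_ev[OF Kt] by metis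
  have ip1: "inv_pair K (lin_triple (cstar A))"
    unfolding inv_pair_def ev_lin
  proof
    obtain y where y: "ev K y \<noteq> 0" using exists_nonzero[OF Kt] by blast
    show "\<exists>x. ev K (cstar A *v x) \<noteq> 0" using y by (intro exI[of _ "A *v y"]) (simp add: inv2_apply[OF Ai])
    show "\<forall>x. par (ev K (cstar A *v x)) x" using par[of "cstar A *v _"] by (simp add: inv2_apply[OF Ai])
  qed
  have ip2: "inv_pair (lin_triple (cstar A)) K"
    unfolding inv_pair_def ev_lin
  proof
    obtain y where y: "ev K y \<noteq> 0" using exists_nonzero[OF Kt] by blast
    show "\<exists>x. cstar A *v ev K x \<noteq> 0" using y inv2_nonzero[OF inv2_sym[OF Ai] y] by blast
    show "\<forall>x. par (cstar A *v ev K x) x" using par_lin[OF par, of "cstar A"] by (simp add: inv2_apply[OF Ai])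
  qed
  have "proj_cls K \<in> H d"
    unfolding H_def W_def proj_cls_def using K
    by (auto intro!: birational_scaled[OF Kt lin_triple1[OF inv2_sym[OF Ai]] ip1 ip2])
  moreover have "bir_of K = piL A"
    unfolding piL_def by (rule par_eq_bir_of[OF Kt lin_triple1[OF Ai]]) (simp add: ev_lin par)
  ultimately show "proj_cls K \<in> H d \<and> bir_of K \<in> piL ` C" using A(1) by auto
qed

lemma closed_pi:
  assumes C: "compact C" "C \<subseteq> U3"
  shows "closedin bir_top (piL ` C)"
proof -
  have piC: "piL ` C \<subseteq> Bir" using C(2) pi_Bir U3_inv2 by blast
  have "openin bir_top (Bir - piL ` C)"
    unfolding openin_bir
  proof (intro conjI allI impI)
    show "Bir - piL ` C \<subseteq> Bir" by auto
    fix d :: nat assume d: "d \<ge> 1"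
    let ?F = "{K. \<exists>A\<in>C. \<forall>x. par (evd d K x) (A *v x)}"
    let ?T = "W d - {P \<in> H d. bir_of_cls P \<in> piL ` C}"
    have "{K \<in> triples d. proj_cls K \<in> ?T} = triples d \<inter> - ?F"
    proof -
      have "K \<in> triples d \<Longrightarrow> proj_cls K \<in> W d" for K by (auto simp: W_def)
      then show ?thesis using Tc_char[OF C(2) _ d] by (auto simp: bir_of_cls_proj)
    qed
    then have "openin (top_of_set (triples d)) {K \<in> triples d. proj_cls K \<in> ?T}"
      using closed_F[OF C(1), of d] by (auto simp: openin_open closed_def)
    then have T: "openin (W_top d) ?T"
      unfolding W_top_def openin_quot by (auto simp: W_def)
    have "{P \<in> H d. bir_of_cls P \<in> (Bir - piL ` C) \<inter> Bir_le d} = ?T \<inter> H d"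
      using Bir_le_sub[OF d] H_sub_W by (auto simp: Bir_le_def)
    then have "openin (H_top d) {P \<in> H d. bir_of_cls P \<in> (Bir - piL ` C) \<inter> Bir_le d}"
      unfolding H_top_def openin_subtopology using T by blast
    then show "openin (Bir_le_top d) ((Bir - piL ` C) \<inter> Bir_le d)"
      unfolding Bir_le_top_def openin_quot topspace_H by (auto simp: Bir_le_def)
  qed
  then show ?thesis using piC by (simp add: closedin_def topspace_bir)
qed

lemma cstar_mult: "cstar (X ** Y) = cstar Y ** cstar X"
  by (simp add: cstar_def matrix_matrix_mult_def vec_eq_iff mult.commute)

lemma cstar_cstar: "cstar (cstar X) = X"
  by (simp add: cstar_def vec_eq_iff)

lemma U3_cstar_left: "X \<in> U3 \<Longrightarrow> cstar X ** X = mat 1"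
  using matrix_left_right_inverse[of X "cstar X"] by (simp add: U3_def)

lemma U3_mult: "X \<in> U3 \<Longrightarrow> Y \<in> U3 \<Longrightarrow> X ** Y \<in> U3"
  unfolding U3_def by (simp add: cstar_mult) (metis matrix_mul_assoc matrix_mul_rid)

lemma U3_cstar: "X \<in> U3 \<Longrightarrow> cstar X \<in> U3"
  unfolding U3_def using U3_cstar_left by (simp add: cstar_cstar U3_def)

lemma cmul_mv: "cmul u X *v v = u *s (X *v v)"
  by (simp add: cmul_def matrix_vector_mult_def vec_eq_iff sum_distrib_left mult.assoc)

lemma cstar_cmul: "cstar (cmul u X) = cmul (cnj u) (cstar X)"
  by (simp add: cstar_def cmul_def vec_eq_iff)

lemma mult_cmul_right: "X ** cmul u Y = cmul u (X ** Y)"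
  by (simp add: cmul_def matrix_matrix_mult_def vec_eq_iff sum_distrib_left mult_ac)

lemma mult_cmul_left: "cmul u X ** Y = cmul u (X ** Y)"
  by (simp add: cmul_def matrix_matrix_mult_def vec_eq_iff sum_distrib_left mult_ac)

lemma cmul_cmul: "cmul u (cmul v X) = cmul (u * v) X"
  by (simp add: cmul_def vec_eq_iff mult.assoc)

lemma cmul_one: "cmul 1 X = X"
  by (simp add: cmul_def vec_eq_iff)

lemma U3_cmul: "X \<in> U3 \<Longrightarrow> u * cnj u = 1 \<Longrightarrow> cmul u X \<in> U3"
proof -
  assume X: "X \<in> U3" and u: "u * cnj u = 1"
  then have "cnj u * u = 1" by (simp add: mult.commute)
  then show ?thesis using X unfolding U3_def by (simp add: cstar_cmul mult_cmul_left mult_cmul_right cmul_cmul cmul_one)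
qed

lemma U3_scalar:
  assumes "X \<in> U3" "cmul l X \<in> U3" shows "l * cnj l = 1"
proof -
  have "cmul (cnj l * l) (mat 1) = mat 1"
    using assms unfolding U3_def by (simp add: cstar_cmul mult_cmul_left mult_cmul_right cmul_cmul)
  then have "(cmul (cnj l * l) (mat 1)) $ 0 $ 0 = (mat 1 :: complex^3^3) $ 0 $ 0" by simp
  then show ?thesis by (simp add: cmul_def mat_def mult.commute)
qed

lemma unit_nz: "u * cnj u = 1 \<Longrightarrow> u \<noteq> 0" by auto

lemma ev_Phi_cmul:
  "ev (Phi (cmul u X) (cmul (cnj u) Xi) c) x = (u * (cnj u)^2) *s ev (Phi X Xi c) x"
  by (simp add: ev_Phi cmul_mv Fq_scale mv_smult vector_smult_assoc mult.commute)

lemma bir_of_Phi_cmul: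
  assumes "u * cnj u = 1"
  shows "bir_of (Phi (cmul u X) (cstar (cmul u X)) c) = bir_of (Phi X (cstar X) c)"
proof (rule bir_of_scale)
  have "u * (cnj u)^2 = cnj u" using assms by (simp add: power2_eq_square mult.assoc[symmetric])
  then show "\<And>x. ev (Phi (cmul u X) (cstar (cmul u X)) c) x = cnj u *s ev (Phi X (cstar X) c) x"
    by (simp add: cstar_cmul ev_Phi_cmul)
  show "cnj u \<noteq> 0" using assms by auto
qed

lemma Fq_zero: "Fq 0 y = (y$0) *s y"
  by (rule vec3_eqI) (simp_all add: Fq_nth)

lemma Phi_zero_id:
  assumes X: "inv2 X Xi" shows "bir_of (Phi X Xi 0) = bir_id"
  unfolding bir_id_def
proof (rule par_eq_bir_of[OF Phi_triple[OF X inv2_sym[OF X]] lin_triple1[OF inv2_mat1]])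
  fix x
  show "par (ev (Phi X Xi 0) x) (ev (lin_triple (mat 1)) x)"
    by (simp add: ev_Phi ev_lin Fq_zero mv_smult inv2_apply[OF X] par_scale_left par_refl)
qed

lemma U3_entry_bound:
  assumes "X \<in> U3" shows "norm (X$i$j) \<le> 1"
proof -
  have "(X ** cstar X)$i$i = 1" using assms by (simp add: U3_def mat_def)
  then have "(\<Sum>k\<in>UNIV. X$i$k * cnj (X$i$k)) = 1"
    by (simp add: matrix_matrix_mult_def cstar_def)
  moreover have "X$i$k * cnj (X$i$k) = complex_of_real ((norm (X$i$k))^2)" for k
    by (rule complex_norm_square[symmetric])
  ultimately have "(\<Sum>k\<in>UNIV. complex_of_real ((norm (X$i$k))^2)) = 1"
    by (simp only:)
  then have "complex_of_real (\<Sum>k\<in>UNIV. (norm (X$i$k))^2) = 1"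
    by (simp only: of_real_sum)
  then have s: "(\<Sum>k\<in>UNIV. (norm (X$i$k))^2) = 1"
    using of_real_eq_1_iff by blast
  have "(norm (X$i$j))^2 \<le> (\<Sum>k\<in>UNIV. (norm (X$i$k))^2)"
    by (rule member_le_sum) auto
  then have "(norm (X$i$j))^2 \<le> 1" using s by simp
  then show ?thesis by (simp add: power_le_one_iff abs_le_square_iff[symmetric])
qed

lemma norm_vec_le_sum: "norm (x::'a::real_normed_vector^'n) \<le> (\<Sum>i\<in>UNIV. norm (x$i))"
  by (simp add: norm_vec_def L2_set_le_sum)

lemma compact_U3: "compact U3"
  unfolding compact_eq_bounded_closed
proof
  have "norm X \<le> 9" if "X \<in> U3" for X
  proof -
    have "norm (X$i) \<le> 3" for i
    proof -
      have "norm (X$i) \<le> (\<Sum>j\<in>UNIV. norm (X$i$j))" by (rule norm_vec_le_sum)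
      also have "\<dots> \<le> (\<Sum>j\<in>(UNIV::3 set). 1)" using U3_entry_bound[OF that] by (intro sum_mono) auto
      finally show ?thesis by simp
    qed
    then have "(\<Sum>i\<in>UNIV. norm (X$i)) \<le> (\<Sum>i\<in>(UNIV::3 set). 3)" by (intro sum_mono) auto
    then show ?thesis using norm_vec_le_sum[of X] by simp
  qed
  then show "bounded U3" unfolding bounded_iff by blast
  have e: "U3 = (\<Inter>i. \<Inter>j. {X. (\<Sum>k\<in>UNIV. X$i$k * cnj (X$j$k)) = (mat 1 :: complex^3^3)$i$j})"
    by (auto simp: U3_def vec_eq_iff matrix_matrix_mult_def cstar_def)
  have c: "closed {X :: complex^3^3. (\<Sum>k\<in>UNIV. X$i$k * cnj (X$j$k)) = (mat 1 :: complex^3^3)$i$j}" for i j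
    by (intro closed_Collect_eq continuous_intros continuous_on_id)
  show "closed U3" unfolding e by (intro closed_INT ballI c)
qed

definition E1 :: "3 \<Rightarrow> 3 \<Rightarrow> 3 \<Rightarrow> complex" where
  "E1 l p q = (if l = 0 \<or> l = 1 then 0 else if p = 1 \<and> q = 1 then 1 else 0)"

lemma E_split: "E c l p q = E 0 l p q + c * E1 l p q"
  by (simp add: E_def E1_def)

lemma if10_mult: "(if P then 1 else 0) * x = (if P then x else (0::complex))" by simp

lemma Phi_coord: "Phi L R c (i,a) = (\<Sum>j\<in>UNIV. \<Sum>k\<in>UNIV. (if a = m2 j k then 1 else 0) *
   (\<Sum>l\<in>UNIV. \<Sum>p\<in>UNIV. \<Sum>q\<in>UNIV. L$i$l * (E 0 l p q + c * E1 l p q) * R$p$j * R$q$k))"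
proof -
  have e: "\<And>l p q. E c l p q = E 0 l p q + c * E1 l p q" by (rule E_split)
  show ?thesis unfolding Phi_def quad_def QP_def m2_def[symmetric] if10_mult e by simp
qed

lemma cont_Phi:
  "continuous_on UNIV (\<lambda>p :: real \<times> (complex^3^3). Phi (M ** snd p) (cstar (M ** snd p)) (complex_of_real (fst p)))"
proof (rule continuous_on_coordinatewise_then_product)
  fix k :: "3 \<times> mono"
  obtain i a where k: "k = (i,a)" by (cases k)
  show "continuous_on UNIV (\<lambda>p :: real \<times> (complex^3^3). Phi (M ** snd p) (cstar (M ** snd p)) (complex_of_real (fst p)) k)"
    unfolding k Phi_coord by (simp add: cstar_def matrix_matrix_mult_def) (intro continuous_intros)
qed

lemma Phi_H:
  assumes L: "inv2 L Li" and R: "inv2 R Ri"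
  shows "Phi L R c \<in> triples 2" "proj_cls (Phi L R c) \<in> H 2"
proof -
  show T: "Phi L R c \<in> triples 2" using Phi_triple[OF L R] by (simp add: triples_def)
  have ip2: "inv_pair (Phi Ri Li (-c)) (Phi L R c)"
    using Phi_inv_pair[OF inv2_sym[OF R] inv2_sym[OF L], of "-c"] by simp
  have "birational (\<lambda>x. k * Phi L R c x)" if "k \<noteq> 0" for k
    by (rule birational_scaled[OF Phi_triple[OF L R] Phi_triple[OF inv2_sym[OF R] inv2_sym[OF L]]
          Phi_inv_pair[OF L R] ip2 that])
  then show "proj_cls (Phi L R c) \<in> H 2"
    unfolding H_def W_def proj_cls_def using T by auto
qed

lemma cont_cmul: "continuous_on UNIV (cmul u)"
  unfolding cmul_def by (intro continuous_on_vec_lambda continuous_intros)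

lemma main_cont:
  fixes \<sigma> :: "real \<Rightarrow> triple set" and Hf :: "real \<times> real \<Rightarrow> triple set"
  assumes cont: "continuous_map (top_of_set {-1..1}) bir_top \<sigma>"
    and Ar: "\<And>y. y \<in> {-1..1} \<Longrightarrow> Ar y \<in> U3 \<and> \<sigma> y = piL (Ar y)"
    and B: "B \<in> U3"
    and Hrep: "\<And>s t. s \<in> {0..1} \<Longrightarrow> t \<in> {0..1} \<Longrightarrow> max s t > 0 \<Longrightarrow>
       Hf (s,t) = bir_of (Phi (cstar B ** Ar (sin (1 / max s t))) (cstar (cstar B ** Ar (sin (1 / max s t)))) (cc t))"
    and H00: "Hf (0,0) = bir_id"
  shows "continuous_map (top_of_set ({0..1} \<times> {0..1})) bir_top Hf"
proof -
  let ?D = "{0..1::real} \<times> {0..1::real}"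
  define \<Gamma> where "\<Gamma> = (\<lambda>q :: real \<times> (complex^3^3). Phi (cstar B ** snd q) (cstar (cstar B ** snd q)) (complex_of_real (fst q)))"
  have Bs: "cstar B \<in> U3" using U3_cstar[OF B] .
  have XU: "A \<in> U3 \<Longrightarrow> cstar B ** A \<in> U3" for A using U3_mult[OF Bs] by blast
  have inv: "A \<in> U3 \<Longrightarrow> inv2 (cstar B ** A) (cstar (cstar B ** A))" for A using U3_inv2[OF XU] by blast
  have sinI: "sin (x::real) \<in> {-1..1}" for x by (auto simp: sin_ge_minus_one sin_le_one)
  have ccr: "cc t = complex_of_real (t * (1 - t))" for t by (simp add: cc_def)
  have Hrep': "Hf (s,t) = bir_of (\<Gamma> (t * (1 - t), Ar (sin (1 / max s t))))"
    if "s \<in> {0..1}" "t \<in> {0..1}" "max s t > 0" for s t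
    using Hrep[OF that] by (simp add: \<Gamma>_def ccr)
  have HBir: "Hf p \<in> Bir" if "p \<in> ?D" for p
  proof -
    obtain s t where p: "p = (s,t)" by (cases p)
    show ?thesis
    proof (cases "max s t > 0")
      case True
      then show ?thesis using that Hrep[of s t] p Ar[OF sinI] Phi_Bir[OF inv inv2_sym[OF inv]] by auto
    next
      case False
      then have "s = 0" "t = 0" using that p by auto
      then show ?thesis using H00 p pi_Bir[OF inv2_mat1] bir_id_pi by simp
    qed
  qed
  have contG: "continuous_on UNIV \<Gamma>" unfolding \<Gamma>_def by (rule cont_Phi)
  show ?thesis
    unfolding continuous_map
  proof (intro conjI allI impI)
    show "Hf ` topspace (top_of_set ?D) \<subseteq> topspace bir_top" using HBir by (auto simp: topspace_bir)
    fix U assume U: "openin bir_top U"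
    obtain G where G: "open G" "\<And>K. K \<in> triples 2 \<Longrightarrow> proj_cls K \<in> H 2 \<Longrightarrow> (K \<in> G \<longleftrightarrow> bir_of K \<in> U)"
      using open_pull[OF U, of 2] by auto
    have KG: "\<Gamma> (r, A) \<in> G \<longleftrightarrow> bir_of (\<Gamma> (r, A)) \<in> U" if "A \<in> U3" for r A
      unfolding \<Gamma>_def using G(2) Phi_H[OF inv[OF that] inv2_sym[OF inv[OF that]]] by simp
    define O1 where "O1 = \<Gamma> -` G"
    have O1: "open O1" unfolding O1_def using continuous_open_preimage[OF contG open_UNIV G(1)] by simp
    show "openin (top_of_set ?D) {p \<in> topspace (top_of_set ?D). Hf p \<in> U}"
      unfolding openin_subopen[of _ "{p \<in> topspace (top_of_set ?D). Hf p \<in> U}"]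
    proof
      fix p assume p: "p \<in> {p \<in> topspace (top_of_set ?D). Hf p \<in> U}"
      obtain s0 t0 where p0: "p = (s0, t0)" by (cases p)
      have s0: "s0 \<in> {0..1}" and t0: "t0 \<in> {0..1}" and HU: "Hf (s0,t0) \<in> U" using p p0 by auto
      show "\<exists>T. openin (top_of_set ?D) T \<and> p \<in> T \<and> T \<subseteq> {p \<in> topspace (top_of_set ?D). Hf p \<in> U}"
      proof (cases "max s0 t0 > 0")
        case False
        then have z: "s0 = 0" "t0 = 0" using s0 t0 by auto
        then have idU: "bir_id \<in> U" using HU H00 by simp
        have sub: "{0} \<times> U3 \<subseteq> O1"
        proof clarify
          fix A assume A: "A \<in> U3"
          have "bir_of (\<Gamma> (0, A)) = bir_id" unfolding \<Gamma>_def using Phi_zero_id[OF inv[OF A]] by simp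
          then show "(0, A) \<in> O1" unfolding O1_def using KG[OF A] idU by simp
        qed
        obtain X0 where X0: "0 \<in> X0" "open X0" "X0 \<times> U3 \<subseteq> O1"
          using Elementary_Topology.tube_lemma[OF compact_U3 O1 sub] by blast
        obtain \<delta> where \<delta>: "\<delta> > 0" "ball 0 \<delta> \<subseteq> X0" using X0(1,2) open_contains_ball by blast
        define Onb where "Onb = {q :: real \<times> real. fst q < \<delta> \<and> snd q < \<delta>}"
        have oO: "open Onb" unfolding Onb_def by (intro open_Collect_conj open_Collect_less continuous_intros)
        show ?thesis
        proof (intro exI conjI)
          show "openin (top_of_set ?D) (?D \<inter> Onb)" using oO by auto
          show "p \<in> ?D \<inter> Onb" using p0 z \<delta> by (auto simp: Onb_def)
          show "?D \<inter> Onb \<subseteq> {p \<in> topspace (top_of_set ?D). Hf p \<in> U}"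
          proof
            fix q assume q: "q \<in> ?D \<inter> Onb"
            obtain s t where qst: "q = (s,t)" by (cases q)
            have st: "s \<in> {0..1}" "t \<in> {0..1}" "(s,t) \<in> Onb" using q qst by auto
            have "Hf (s,t) \<in> U"
            proof (cases "max s t > 0")
              case False
              then have "s = 0" "t = 0" using st by auto
              then show ?thesis using H00 idU by simp
            next
              case True
              let ?A = "Ar (sin (1 / max s t))"
              have A: "?A \<in> U3" using Ar[OF sinI] by blast
              have "t * (1 - t) \<in> ball 0 \<delta>"
              proof -
                have "0 \<le> t * (1 - t)" using st(2) by simp
                moreover have "t * (1 - t) \<le> t" using st(2) by (simp add: algebra_simps)
                ultimately
                show ?thesis using st(3) by (auto simp: Onb_def dist_real_def)
              qed
              then have "(t * (1 - t), ?A) \<in> O1" using X0(3) \<delta>(2) A by blast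
              then have "bir_of (\<Gamma> (t * (1 - t), ?A)) \<in> U" using KG[OF A] unfolding O1_def by simp
              then show ?thesis using Hrep'[OF st(1,2) True] by simp
            qed
            then show "q \<in> {p \<in> topspace (top_of_set ?D). Hf p \<in> U}" using q qst by auto
          qed
        qed
      next
        case True
        define m0 where "m0 = max s0 t0"
        define A0 where "A0 = Ar (sin (1 / m0))"
        have A0: "A0 \<in> U3" "\<sigma> (sin (1 / m0)) = piL A0" using Ar[OF sinI] unfolding A0_def by auto
        have "(t0 * (1 - t0), A0) \<in> O1"
          using HU Hrep'[OF s0 t0 True] KG[OF A0(1)] unfolding O1_def A0_def m0_def by simp
        then obtain Rr N where RN: "open Rr" "open N" "(t0 * (1 - t0), A0) \<in> Rr \<times> N" "Rr \<times> N \<subseteq> O1"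
          using open_prod_elim[OF O1] by metis
        define N' where "N' = {A. \<exists>u. u * cnj u = 1 \<and> cmul u A \<in> N}"
        have oN': "open N'"
        proof -
          have "N' = (\<Union>u\<in>{u. u * cnj u = 1}. UNIV \<inter> cmul u -` N)" unfolding N'_def by auto
          moreover have "open (UNIV \<inter> cmul u -` N)" for u
            by (rule continuous_open_preimage[OF cont_cmul open_UNIV RN(2)])
          ultimately show ?thesis by auto
        qed
        define C where "C = U3 - N'"
        have C: "compact C" "C \<subseteq> U3" unfolding C_def using compact_diff[OF compact_U3 oN'] by auto
        have Z: "closedin bir_top (piL ` C)" by (rule closed_pi[OF C])
        have "openin bir_top (Bir - piL ` C)" using Z by (simp add: closedin_def topspace_bir)
        then have "openin (top_of_set {-1..1}) {y \<in> {-1..1}. \<sigma> y \<in> Bir - piL ` C}"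
          using cont unfolding continuous_map by auto
        then obtain Oy where Oy: "open Oy" "{y \<in> {-1..1}. \<sigma> y \<in> Bir - piL ` C} = {-1..1} \<inter> Oy"
          unfolding openin_open by blast
        have memOy: "\<sigma> y \<notin> piL ` C" if "y \<in> {-1..1}" "y \<in> Oy" for y
          using Oy(2) that by blast
        have y0: "sin (1 / m0) \<in> Oy"
        proof -
          have "\<sigma> (sin (1 / m0)) \<notin> piL ` C"
          proof
            assume "\<sigma> (sin (1 / m0)) \<in> piL ` C"
            then obtain A' where A': "A' \<in> C" "piL A0 = piL A'" using A0(2) by auto
            have A'U: "A' \<in> U3" using A'(1) C(2) by auto
            define l where "l = (cstar A0 ** A')$0$0"
            have eq: "A' = cmul l A0" using pi_inj[OF U3_inv2[OF A0(1)] U3_inv2[OF A'U] A'(2)] by (simp add: l_def)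
            have l1: "l * cnj l = 1" using U3_scalar[OF A0(1)] A'U eq by simp
            have "cmul (cnj l) A' = A0" using l1 by (simp add: eq cmul_cmul mult.commute cmul_one)
            moreover have "cnj l * cnj (cnj l) = 1" using l1 by (simp add: mult.commute)
            ultimately have "cmul (cnj l) A' \<in> N" "cnj l * cnj (cnj l) = 1" using RN(3) by auto
            then have "A' \<in> N'" unfolding N'_def by blast
            then show False using A'(1) unfolding C_def by auto
          qed
          moreover have "\<sigma> (sin (1 / m0)) \<in> Bir" using A0 pi_Bir[OF U3_inv2[OF A0(1)]] by simp
          ultimately show ?thesis using Oy(2) sinI by blast
        qed
        define Mp where "Mp = {q :: real \<times> real. max (fst q) (snd q) > 0}"
        have oMp: "open Mp" unfolding Mp_def by (intro open_Collect_less continuous_intros)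
        define gq where "gq = (\<lambda>q :: real \<times> real. (sin (1 / max (fst q) (snd q)), snd q * (1 - snd q)))"
        have cgq: "continuous_on Mp gq"
          unfolding gq_def Mp_def by (intro continuous_intros) auto
        define Onb where "Onb = Mp \<inter> gq -` (Oy \<times> Rr)"
        have oO: "open Onb" unfolding Onb_def by (rule continuous_open_preimage[OF cgq oMp open_Times[OF Oy(1) RN(1)]])
        show ?thesis
        proof (intro exI conjI)
          show "openin (top_of_set ?D) (?D \<inter> Onb)" using oO by auto
          show "p \<in> ?D \<inter> Onb" using p0 s0 t0 True y0 RN(3) unfolding Onb_def Mp_def gq_def m0_def by auto
          show "?D \<inter> Onb \<subseteq> {p \<in> topspace (top_of_set ?D). Hf p \<in> U}"
          proof
            fix q assume q: "q \<in> ?D \<inter> Onb"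
            obtain s t where qst: "q = (s,t)" by (cases q)
            have st: "s \<in> {0..1}" "t \<in> {0..1}" "(s,t) \<in> Onb" using q qst by auto
            have mpos: "max s t > 0" and yO: "sin (1 / max s t) \<in> Oy" and rR: "t * (1 - t) \<in> Rr"
              using st(3) unfolding Onb_def Mp_def gq_def by auto
            let ?A = "Ar (sin (1 / max s t))"
            have A: "?A \<in> U3" "\<sigma> (sin (1 / max s t)) = piL ?A" using Ar[OF sinI] by auto
            have "?A \<notin> C" using memOy[OF sinI yO] A(2) by auto
            then have "?A \<in> N'" using A(1) unfolding C_def by auto
            then obtain u where u: "u * cnj u = 1" "cmul u ?A \<in> N" unfolding N'_def by auto
            have uA: "cmul u ?A \<in> U3" using U3_cmul[OF A(1) u(1)] .
            have "(t * (1 - t), cmul u ?A) \<in> O1" using RN(4) rR u(2) by auto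
            then have "bir_of (\<Gamma> (t * (1 - t), cmul u ?A)) \<in> U" using KG[OF uA] unfolding O1_def by simp
            moreover have "bir_of (\<Gamma> (t * (1 - t), cmul u ?A)) = bir_of (\<Gamma> (t * (1 - t), ?A))"
              unfolding \<Gamma>_def using bir_of_Phi_cmul[OF u(1), of "cstar B ** ?A"] by (simp add: mult_cmul_right)
            ultimately have "Hf (s,t) \<in> U" using Hrep'[OF st(1,2) mpos] by simp
            then show "q \<in> {p \<in> topspace (top_of_set ?D). Hf p \<in> U}" using q qst by auto
          qed
        qed
      qed
    qed
  qed
qed

theorem lemma5p2:
  fixes \<sigma> :: "real \<Rightarrow> triple set"
  assumes cont: "continuous_map (top_of_set {-1..1}) bir_top \<sigma>"
    and surj: "\<sigma> ` {-1..1} = PSU3"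
  defines "\<sigma>h \<equiv> \<lambda>t. bir_comp (bir_inv (\<sigma> (sin 1))) (\<sigma> (sin (1 / t)))"
    and "\<rho> \<equiv> \<lambda>t. let g = bir_comp (bir_inv (\<sigma> (sin 1))) (\<sigma> (sin (1 / t)))
                    in bir_comp g (bir_comp (f t) (bir_inv g))"
  shows "\<exists>\<rho>h. continuous_map (top_of_set {0..1}) bir_top \<rho>h
            \<and> (\<forall>t\<in>{0<..1}. \<rho>h t = \<rho> t)
            \<and> \<rho>h 0 = bir_id
            \<and> continuous_map (top_of_set ({0..1} \<times> {0..1})) bir_top
                (\<lambda>(s, t). if t \<ge> s then \<rho>h t
                          else bir_comp (\<sigma>h s) (bir_comp (f t) (bir_inv (\<sigma>h s))))
            \<and> homotopic_with (\<lambda>_. True) (top_of_set {0..1}) bir_top \<rho>h f"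
proof -
  note defs = assms(3,4)
  let ?SU = "{A::complex^3^3. A ** cstar A = mat 1 \<and> det A = 1}"
  have PSU: "PSU3 = piL ` ?SU" by (auto simp: PSU3_def piL_def)
  define Ar where "Ar y = (SOME A. A \<in> ?SU \<and> \<sigma> y = piL A)" for y
  have Ar: "Ar y \<in> U3 \<and> \<sigma> y = piL (Ar y)" if "y \<in> {-1..1}" for y
  proof -
    have "\<sigma> y \<in> piL ` ?SU" using surj that PSU by blast
    then have "\<exists>A. A \<in> ?SU \<and> \<sigma> y = piL A" by auto
    then have "Ar y \<in> ?SU \<and> \<sigma> y = piL (Ar y)" unfolding Ar_def by (rule someI_ex)
    then show ?thesis by (auto simp: U3_def)
  qed
  have sinI: "sin (x::real) \<in> {-1..1}" for x by auto
  define B where "B = Ar (sin 1)"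
  have B: "B \<in> U3" "\<sigma> (sin 1) = piL B" using Ar[OF sinI] B_def by auto
  define Xm where "Xm m = cstar B ** Ar (sin (1/m))" for m
  have XmU: "Xm m \<in> U3" for m
    unfolding Xm_def using U3_mult[OF U3_cstar[OF B(1)]] Ar[OF sinI] by blast
  have \<sigma>h_eq: "\<sigma>h m = piL (Xm m)" for m
  proof -
    have A: "Ar (sin (1/m)) \<in> U3" "\<sigma> (sin (1/m)) = piL (Ar (sin (1/m)))" using Ar[OF sinI] by auto
    have "\<sigma>h m = bir_comp (bir_inv (piL B)) (piL (Ar (sin (1/m))))" using defs(1) B(2) A(2) by simp
    also have "\<dots> = bir_comp (piL (cstar B)) (piL (Ar (sin (1/m))))" using bir_inv_pi[OF U3_inv2[OF B(1)]] by simp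
    also have "\<dots> = piL (Xm m)" unfolding Xm_def
      by (rule pi_comp[OF inv2_sym[OF U3_inv2[OF B(1)]] U3_inv2[OF A(1)]])
    finally show ?thesis .
  qed
  have \<rho>_eq: "\<rho> m = bir_comp (\<sigma>h m) (bir_comp (f m) (bir_inv (\<sigma>h m)))" for m
    using defs by (simp add: Let_def)
  have \<rho>_Phi: "\<rho> m = bir_of (Phi (Xm m) (cstar (Xm m)) (cc m))" for m
    using \<rho>_eq[of m] \<sigma>h_eq[of m] conj_eq[OF U3_inv2[OF XmU]] by simp
  define \<rho>h where "\<rho>h t = (if t = 0 then bir_id else \<rho> t)" for t
  define Hf where "Hf = (\<lambda>(s::real, t::real). if t \<ge> s then \<rho>h t
                          else bir_comp (\<sigma>h s) (bir_comp (f t) (bir_inv (\<sigma>h s))))"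
  have Hrep: "Hf (s,t) = bir_of (Phi (cstar B ** Ar (sin (1 / max s t))) (cstar (cstar B ** Ar (sin (1 / max s t)))) (cc t))"
    if "s \<in> {0..1}" "t \<in> {0..1}" "max s t > 0" for s t
  proof (cases "t \<ge> s")
    case True
    then have "max s t = t" "t \<noteq> 0" using that by auto
    then show ?thesis using True by (simp add: Hf_def \<rho>h_def \<rho>_Phi Xm_def)
  next
    case False
    then have "max s t = s" by auto
    then show ?thesis using False \<sigma>h_eq[of s] conj_eq[OF U3_inv2[OF XmU[of s]]]
      by (simp add: Hf_def Xm_def)
  qed
  have H00: "Hf (0,0) = bir_id" by (simp add: Hf_def \<rho>h_def)
  have Hc: "continuous_map (top_of_set ({0..1} \<times> {0..1})) bir_top Hf"
    by (rule main_cont[OF cont Ar B(1) Hrep H00]) auto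
  have H0: "Hf (0,t) = \<rho>h t" if "t \<in> {0..1}" for t using that by (simp add: Hf_def)
  have H1: "Hf (1,t) = f t" if "t \<in> {0..1}" for t
  proof -
    have "Hf (1,t) = bir_of (Phi (cstar B ** B) (cstar (cstar B ** B)) (cc t))"
    proof -
      have m: "max 1 t = 1" using that by auto
      show ?thesis using Hrep[of 1 t] that by (simp add: m B_def)
    qed
    also have "\<dots> = bir_of (Phi (mat 1) (mat 1) (cc t))"
    proof -
      have e: "cstar B ** B = mat 1" by (rule U3_cstar_left[OF B(1)])
      have cm: "cstar (mat 1 :: complex^3^3) = mat 1" by (auto simp: cstar_def mat_def vec_eq_iff)
      show ?thesis by (simp only: e cm)
    qed
    also have "\<dots> = f t" unfolding f_def
      by (rule bir_of_scale[of _ 1]) (simp_all add: ev_Phi ev_ftr)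
    finally show ?thesis .
  qed
  have \<rho>h_cont: "continuous_map (top_of_set {0..1}) bir_top \<rho>h"
  proof -
    have "continuous_map (top_of_set {0..1}) (top_of_set ({0..1} \<times> {0..1})) (\<lambda>t::real. (0::real, t))"
      by (auto intro!: continuous_intros)
    from continuous_map_compose[OF this Hc]
    have "continuous_map (top_of_set {0..1}) bir_top (Hf \<circ> (\<lambda>t. (0, t)))" .
    then show ?thesis by (rule continuous_map_eq) (simp add: H0)
  qed
  have hom: "homotopic_with (\<lambda>_. True) (top_of_set {0..1}) bir_top \<rho>h f"
    unfolding homotopic_with_def
  proof (intro exI conjI allI ballI)
    let ?h = "\<lambda>q::real \<times> real. if fst q = 0 then \<rho>h (snd q) else if fst q = 1 then f (snd q) else Hf q"
    show "continuous_map (prod_topology (top_of_set {0..1}) (top_of_set {0..1})) bir_top ?h"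
      unfolding prod_topology_subtopology_eu
      by (rule continuous_map_eq[OF Hc]) (auto simp: H0 H1)
    fix x
    show "?h (0, x) = \<rho>h x" by simp
    show "?h (1, x) = f x" by simp
  qed simp
  show ?thesis
  proof (intro exI[of _ \<rho>h] conjI)
    show "continuous_map (top_of_set {0..1}) bir_top \<rho>h" by (rule \<rho>h_cont)
    show "\<forall>t\<in>{0<..1}. \<rho>h t = \<rho> t" by (simp add: \<rho>h_def)
    show "\<rho>h 0 = bir_id" by (simp add: \<rho>h_def)
    show "continuous_map (top_of_set ({0..1} \<times> {0..1})) bir_top
                (\<lambda>(s, t). if t \<ge> s then \<rho>h t
                          else bir_comp (\<sigma>h s) (bir_comp (f t) (bir_inv (\<sigma>h s))))"
      using Hc by (simp add: Hf_def)
    show "homotopic_with (\<lambda>_. True) (top_of_set {0..1}) bir_top \<rho>h f" by (rule hom)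
  qed
qed

end
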